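(* Let $T\ge1$ be an integer and run the randomized incremental proximal method from a deterministic $x_0\in\mathbb{R}^n$ with step size $\tau=\frac{1}{5L\sqrt{T}}$: \[ x_{t+1}=\operatorname{prox}_{\tau m g_{j_t}}\bigl(x_t-\tau\nabla f_{i_t}(x_t)\bigr),\quad t=0,\dots,T. \] Then \[ \mathbb{E}\left[h(x_{T+1})-h^*\right]\le\frac{10}{\sqrt{T}}\left[LD_*^2+\frac{1}{\sqrt{T}}\bigl(h(x_0)-h^*\bigr)+\frac{\sigma_*^2+4m^2L_g^2}{L}\Bigl(\frac1T+4\ln(T+1)\Bigr)\right]. \]
   Context: Setting. Let $D$ be a probability distribution on an index set, and for each index $i$ let $f_i:\mathbb{R}^n\to\mathbb{R}$ be convex and differentiable with $L$-Lipschitz gradient ($L>0$). Let $f(x)=\mathbb{E}_{i\sim D}[f_i(x)]$ with $\mathbb{E}_{i\sim D}[\nabla f_i(x)]=\nabla f(x)$ for all $x$. Let $g=\sum_{j=1}^m g_j$ where each $g_j:\mathbb{R}^n\to\mathbb{R}$ is proper, convex, lower semicontinuous and $L_g$-Lipschitz ($|g_j(x)-g_j(y)|\le L_g\|x-y\|$). Let $h=f+g$, assume $X^*=\arg\min h$ is nonempty, $h^*=\min h$, $D_*^2=\min_{x^*\in X^*}\|x^*-x_0\|^2$, and $\sigma_*^2:=\mathbb{E}_{i\sim D}\|\nabla f_i(x^* )\|^2<\infty$ for some $x^*\in X^*$. For $\lambda>0$, $\operatorname{prox}_{\lambda \phi}(y)=\arg\min_z\{\lambda\phi(z)+\tfrac12\|y-z\|^2\}$.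 At each iteration $i_t$ is drawn from $D$ and $j_t$ uniformly from $\{1,\dots,m\}$, independently of each other and of $x_0,\dots,x_t$ (i.i.d. across iterations). *)

theory Defs
  imports "HOL-Probability.Probability"
begin

definition prox :: "real \<Rightarrow> ('a::real_normed_vector \<Rightarrow> real) \<Rightarrow> 'a \<Rightarrow> 'a" where
  "prox lam \<phi> y =
     (SOME z. \<forall>w. lam * \<phi> z + (norm (y - z))^2 / 2 \<le> lam * \<phi> w + (norm (y - w))^2 / 2)"

definition lower_semicontinuous :: "('a::topological_space \<Rightarrow> real) \<Rightarrow> bool" where
  "lower_semicontinuous \<phi> \<longleftrightarrow> (\<forall>x. \<forall>e>0. \<forall>\<^sub>F y in at x. \<phi> x - e < \<phi> y)"

primrec rip_iter ::
  "'a::real_inner \<Rightarrow> real \<Rightarrow> nat \<Rightarrow> ('i \<Rightarrow> 'a \<Rightarrow> 'a) \<Rightarrow> (nat \<Rightarrow> 'a \<Rightarrow> real)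
   \<Rightarrow> (nat \<Rightarrow> 'i) \<Rightarrow> (nat \<Rightarrow> nat) \<Rightarrow> nat \<Rightarrow> 'a" where
  "rip_iter x0 \<tau> m gradf g I J 0 = x0"
| "rip_iter x0 \<tau> m gradf g I J (Suc t) =
     prox (\<tau> * real m) (g (J t))
       (rip_iter x0 \<tau> m gradf g I J t - \<tau> *\<^sub>R gradf (I t) (rip_iter x0 \<tau> m gradf g I J t))"

end

theory Submission
  imports Defs "HOL-Analysis.Harmonic_Numbers"
begin

lemma le0_by_small:
  fixes A B :: real
  assumes "\<And>s. 0 < s \<Longrightarrow> s \<le> 1 \<Longrightarrow> A \<le> s * B"
  shows "A \<le> 0"
proof (rule ccontr)
  assume "\<not> A \<le> 0" hence A: "A > 0" by simp
  show False
  proof (cases "B \<le> 0")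
    case True thus False using assms[of 1] A by simp
  next
    case False
    define s where "s = min 1 (A / (2*B))"
    have s: "0 < s" "s \<le> 1" using A False by (auto simp: s_def)
    have "s * B \<le> A/(2*B) * B" using False by (intro mult_right_mono) (auto simp: s_def)
    also have "\<dots> = A/2" using False by simp
    finally show False using assms[OF s] A by simp
  qed
qed

lemma line_deriv:
  fixes f :: "'a::real_inner \<Rightarrow> real"
  assumes "\<And>x. (f has_derivative (\<lambda>v. G x \<bullet> v)) (at x)"
  shows "((\<lambda>s. f (x + s *\<^sub>R d)) has_real_derivative (G (x + s *\<^sub>R d) \<bullet> d)) (at s)"
proof -
  have "((\<lambda>s. x + s *\<^sub>R d) has_derivative (\<lambda>h. h *\<^sub>R d)) (at s)"
    by (auto intro!: derivative_eq_intros)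
  from has_derivative_compose[OF this assms[of "x + s *\<^sub>R d"]]
  have "((\<lambda>s. f (x + s *\<^sub>R d)) has_derivative (\<lambda>h. G (x + s *\<^sub>R d) \<bullet> (h *\<^sub>R d))) (at s)" .
  thus ?thesis unfolding has_field_derivative_def
    by (rule has_derivative_eq_rhs) (auto simp: fun_eq_iff algebra_simps)
qed

lemma descent2:
  fixes f :: "'a::real_inner \<Rightarrow> real"
  assumes der: "\<And>x. (f has_derivative (\<lambda>v. G x \<bullet> v)) (at x)"
    and lip: "\<And>x y. norm (G x - G y) \<le> L * norm (x - y)"
  shows "\<bar>f y - f x - G x \<bullet> (y - x)\<bar> \<le> L/2 * (norm (y - x))^2"
proof -
  define d where "d = y - x"
  have key: "\<bar>G (x + s *\<^sub>R d) \<bullet> d - G x \<bullet> d\<bar> \<le> L * s * (norm d)^2" if "0 \<le> s" for s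
  proof -
    have "\<bar>G (x + s *\<^sub>R d) \<bullet> d - G x \<bullet> d\<bar> = \<bar>(G (x + s *\<^sub>R d) - G x) \<bullet> d\<bar>"
      by (simp add: inner_diff_left)
    also have "\<dots> \<le> norm (G (x + s *\<^sub>R d) - G x) * norm d" by (rule Cauchy_Schwarz_ineq2)
    also have "\<dots> \<le> (L * norm (s *\<^sub>R d)) * norm d"
      using lip[of "x + s *\<^sub>R d" x] by (intro mult_right_mono) auto
    also have "\<dots> = L * s * (norm d)^2" using that by (simp add: power2_eq_square)
    finally show ?thesis .
  qed
  define c where "c = G x \<bullet> d"
  have up: "f (x + 1 *\<^sub>R d) - 1 * c - L/2 * 1^2 * (norm d)^2 \<le> f (x + 0 *\<^sub>R d) - 0 * c - L/2 * 0^2 * (norm d)^2"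
  proof (rule DERIV_nonpos_imp_nonincreasing[where f = "\<lambda>s. f (x + s *\<^sub>R d) - s * c - L/2 * s^2 * (norm d)^2"])
    fix s :: real assume s: "0 \<le> s" "s \<le> 1"
    have "((\<lambda>s. f (x + s *\<^sub>R d) - s * c - L/2 * s^2 * (norm d)^2) has_real_derivative
          (G (x + s *\<^sub>R d) \<bullet> d - c - L * s * (norm d)^2)) (at s)"
      by (rule line_deriv[OF der] derivative_eq_intros refl | simp)+
    moreover have "G (x + s *\<^sub>R d) \<bullet> d - c - L * s * (norm d)^2 \<le> 0"
      using key[OF s(1)] unfolding c_def by linarith
    ultimately show "\<exists>y. ((\<lambda>s. f (x + s *\<^sub>R d) - s * c - L/2 * s^2 * (norm d)^2) has_real_derivative y) (at s) \<and> y \<le> 0"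
      by blast
  qed simp
  have lo: "f (x + 0 *\<^sub>R d) - 0 * c + L/2 * 0^2 * (norm d)^2 \<le> f (x + 1 *\<^sub>R d) - 1 * c + L/2 * 1^2 * (norm d)^2"
  proof (rule DERIV_nonneg_imp_nondecreasing[where f = "\<lambda>s. f (x + s *\<^sub>R d) - s * c + L/2 * s^2 * (norm d)^2"])
    fix s :: real assume s: "0 \<le> s" "s \<le> 1"
    have "((\<lambda>s. f (x + s *\<^sub>R d) - s * c + L/2 * s^2 * (norm d)^2) has_real_derivative
          (G (x + s *\<^sub>R d) \<bullet> d - c + L * s * (norm d)^2)) (at s)"
      by (rule line_deriv[OF der] derivative_eq_intros refl | simp)+
    moreover have "G (x + s *\<^sub>R d) \<bullet> d - c + L * s * (norm d)^2 \<ge> 0"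
      using key[OF s(1)] unfolding c_def by linarith
    ultimately show "\<exists>y. ((\<lambda>s. f (x + s *\<^sub>R d) - s * c + L/2 * s^2 * (norm d)^2) has_real_derivative y) (at s) \<and> y \<ge> 0"
      by blast
  qed simp
  have "x + d = y" by (simp add: d_def)
  with up lo have u: "f y - f x - G x \<bullet> (y - x) \<le> L/2 * (norm (y - x))^2"
    and l: "-(L/2 * (norm (y - x))^2) \<le> f y - f x - G x \<bullet> (y - x)"
    unfolding c_def d_def by simp_all
  show ?thesis unfolding abs_le_iff using u l by linarith
qed

lemma grad_ineq:
  fixes f :: "'a::real_inner \<Rightarrow> real"
  assumes cv: "convex_on UNIV f"
    and der: "\<And>x. (f has_derivative (\<lambda>v. G x \<bullet> v)) (at x)"
    and lip: "\<And>x y. norm (G x - G y) \<le> L * norm (x - y)"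
  shows "f x + G x \<bullet> (z - x) \<le> f z"
proof -
  define d where "d = z - x"
  have "G x \<bullet> d - (f z - f x) \<le> 0"
  proof (rule le0_by_small[where B = "L/2 * (norm d)^2"])
    fix s :: real assume s: "0 < s" "s \<le> 1"
    have "f ((1 - s) *\<^sub>R x + s *\<^sub>R z) \<le> (1 - s) * f x + s * f z"
      using s by (intro convex_onD[OF cv]) auto
    moreover have "(1 - s) *\<^sub>R x + s *\<^sub>R z = x + s *\<^sub>R d" by (simp add: d_def algebra_simps)
    ultimately have c1: "f (x + s *\<^sub>R d) - f x \<le> s * (f z - f x)" by (simp add: algebra_simps)
    have "\<bar>f (x + s *\<^sub>R d) - f x - G x \<bullet> ((x + s *\<^sub>R d) - x)\<bar> \<le> L/2 * (norm ((x + s *\<^sub>R d) - x))^2"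
      by (rule descent2[OF der lip])
    hence A: "\<bar>f (x + s *\<^sub>R d) - f x - s * (G x \<bullet> d)\<bar> \<le> L/2 * (s^2 * (norm d)^2)"
      using s by (simp add: power_mult_distrib)
    hence "s * (G x \<bullet> d) - L/2 * (s^2 * (norm d)^2) \<le> f (x + s *\<^sub>R d) - f x"
      by (simp only: abs_le_iff) linarith
    with c1 have "s * (G x \<bullet> d - (f z - f x)) \<le> s * (s * (L/2 * (norm d)^2))"
      by (simp add: algebra_simps power2_eq_square)
    thus "G x \<bullet> d - (f z - f x) \<le> s * (L/2 * (norm d)^2)" using s by simp
  qed
  thus ?thesis by (simp add: d_def)
qed

lemma cocoercive:
  fixes f :: "'a::real_inner \<Rightarrow> real"
  assumes cv: "convex_on UNIV f"
    and der: "\<And>x. (f has_derivative (\<lambda>v. G x \<bullet> v)) (at x)"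
    and lip: "\<And>x y. norm (G x - G y) \<le> L * norm (x - y)"
    and L: "L > 0"
  shows "(norm (G y - G x))^2 \<le> 2 * L * (f y - f x - G x \<bullet> (y - x))"
proof -
  define \<phi> where "\<phi> z = f z - G x \<bullet> z" for z
  define H where "H z = G z - G x" for z
  have der': "(\<phi> has_derivative (\<lambda>v. H z \<bullet> v)) (at z)" for z
    unfolding \<phi>_def H_def
    by (rule has_derivative_eq_rhs, (rule der derivative_eq_intros)+) (auto simp: inner_diff_left)
  have lip': "norm (H a - H b) \<le> L * norm (a - b)" for a b
    using lip[of a b] by (simp add: H_def)
  have min: "\<phi> x \<le> \<phi> z" for z
    using grad_ineq[OF cv der lip, of x z] by (simp add: \<phi>_def inner_diff_right)
  define w where "w = y - (1/L) *\<^sub>R H y"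
  have "\<bar>\<phi> w - \<phi> y - H y \<bullet> (w - y)\<bar> \<le> L/2 * (norm (w - y))^2"
    by (rule descent2[OF der' lip'])
  moreover have "H y \<bullet> (w - y) = - (1/L) * (norm (H y))^2"
    by (simp add: w_def power2_norm_eq_inner)
  moreover have "(norm (w - y))^2 = (1/L)^2 * (norm (H y))^2"
    using L by (simp add: w_def power_mult_distrib power_divide)
  ultimately have "\<phi> w \<le> \<phi> y - (1/L) * (norm (H y))^2 + L/2 * ((1/L)^2 * (norm (H y))^2)"
    by (simp only: abs_le_iff) linarith
  also have "L/2 * ((1/L)^2 * (norm (H y))^2) = (1/(2*L)) * (norm (H y))^2"
    using L by (simp add: power2_eq_square field_simps)
  finally have "\<phi> x \<le> \<phi> y - (1/(2*L)) * (norm (H y))^2" using min[of w] by (simp add: field_simps)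
  hence "(1/(2*L)) * (norm (H y))^2 \<le> f y - f x - G x \<bullet> (y - x)"
    by (simp add: \<phi>_def inner_diff_right)
  hence "(norm (H y))^2 \<le> 2 * L * (f y - f x - G x \<bullet> (y - x))"
    using L by (simp add: field_simps)
  thus ?thesis by (simp add: H_def)
qed

lemma nsq_diff: "(norm (a - b))^2 = (norm a)^2 - 2*(a \<bullet> b) + (norm (b::'a::real_inner))^2"
  by (simp add: power2_norm_eq_inner inner_diff_left inner_diff_right inner_commute)

lemma nsq_add: "(norm (a + b))^2 = (norm a)^2 + 2*(a \<bullet> b) + (norm (b::'a::real_inner))^2"
  by (simp add: power2_norm_eq_inner inner_add_left inner_add_right inner_commute)

lemma lip_cont:
  fixes \<phi> :: "'a::real_normed_vector \<Rightarrow> real"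
  assumes "\<And>x y. \<bar>\<phi> x - \<phi> y\<bar> \<le> K * norm (x - y)" "K \<ge> 0"
  shows "continuous_on UNIV \<phi>"
proof (rule lipschitz_on_continuous_on)
  show "K-lipschitz_on UNIV \<phi>"
    using assms by (auto simp: lipschitz_on_def dist_norm)
qed

lemma prox_exists:
  fixes \<phi> :: "'a::euclidean_space \<Rightarrow> real"
  assumes lip: "\<And>x y. \<bar>\<phi> x - \<phi> y\<bar> \<le> K * norm (x - y)" and K: "K \<ge> 0" and lam: "lam \<ge> 0"
  shows "\<exists>z. \<forall>w. lam * \<phi> z + (norm (y - z))^2 / 2 \<le> lam * \<phi> w + (norm (y - w))^2 / 2"
proof -
  define \<Phi> where "\<Phi> z = lam * \<phi> z + (norm (y - z))^2 / 2" for z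
  define R where "R = 2 * lam * K + 1"
  have cont: "continuous_on (cball y R) \<Phi>"
    unfolding \<Phi>_def
    by (intro continuous_intros continuous_on_subset[OF lip_cont[OF lip K]]) auto
  have "R \<ge> 0" using K lam by (simp add: R_def)
  then obtain z where z: "z \<in> cball y R" "\<And>w. w \<in> cball y R \<Longrightarrow> \<Phi> z \<le> \<Phi> w"
    using continuous_attains_inf[OF compact_cball _ cont] by fastforce
  have "\<Phi> z \<le> \<Phi> w" for w
  proof (cases "w \<in> cball y R")
    case True thus ?thesis using z by blast
  next
    case False
    hence nw: "norm (w - y) > R" by (simp add: dist_norm norm_minus_commute)
    have "\<phi> y - K * norm (w - y) \<le> \<phi> w" using lip[of w y] by (simp add: abs_le_iff)
    hence "lam * \<phi> y - lam * K * norm (w - y) \<le> lam * \<phi> w"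
      using lam mult_left_mono by (fastforce simp: algebra_simps)
    moreover have "lam * K * norm (w - y) \<le> (norm (w - y))^2 / 2"
    proof -
      have "2 * lam * K \<le> norm (w - y)" using nw by (simp add: R_def)
      hence "(2 * lam * K) * norm (w - y) \<le> norm (w - y) * norm (w - y)"
        by (intro mult_right_mono) auto
      thus ?thesis by (simp add: power2_eq_square)
    qed
    ultimately have "\<Phi> y \<le> \<Phi> w" by (simp add: \<Phi>_def norm_minus_commute)
    moreover have "\<Phi> z \<le> \<Phi> y" using z(2)[of y] \<open>R \<ge> 0\<close> by simp
    ultimately show ?thesis by simp
  qed
  thus ?thesis unfolding \<Phi>_def by blast
qed

lemma prox_min:
  fixes \<phi> :: "'a::euclidean_space \<Rightarrow> real"
  assumes lip: "\<And>x y. \<bar>\<phi> x - \<phi> y\<bar> \<le> K * norm (x - y)" and K: "K \<ge> 0" and lam: "lam \<ge> 0"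
  shows "lam * \<phi> (prox lam \<phi> y) + (norm (y - prox lam \<phi> y))^2 / 2 \<le> lam * \<phi> w + (norm (y - w))^2 / 2"
  using someI_ex[OF prox_exists[OF lip K lam, of y]] unfolding prox_def by blast

lemma prox_var:
  fixes \<phi> :: "'a::euclidean_space \<Rightarrow> real"
  assumes lip: "\<And>x y. \<bar>\<phi> x - \<phi> y\<bar> \<le> K * norm (x - y)" and K: "K \<ge> 0" and lam: "lam \<ge> 0"
    and cv: "convex_on UNIV \<phi>"
  shows "lam * (\<phi> (prox lam \<phi> y) - \<phi> w) \<le> (y - prox lam \<phi> y) \<bullet> (prox lam \<phi> y - w)"
proof -
  define z where "z = prox lam \<phi> y"
  have "lam * (\<phi> z - \<phi> w) + (y - z) \<bullet> (w - z) \<le> 0"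
  proof (rule le0_by_small[where B = "(norm (w - z))^2 / 2"])
    fix s :: real assume s: "0 < s" "s \<le> 1"
    have m: "lam * \<phi> z + (norm (y - z))^2 / 2 \<le> lam * \<phi> ((1 - s) *\<^sub>R z + s *\<^sub>R w) + (norm (y - ((1 - s) *\<^sub>R z + s *\<^sub>R w)))^2 / 2"
      unfolding z_def by (rule prox_min[OF lip K lam])
    have "\<phi> ((1 - s) *\<^sub>R z + s *\<^sub>R w) \<le> (1 - s) * \<phi> z + s * \<phi> w"
      using s by (intro convex_onD[OF cv]) auto
    hence c: "lam * \<phi> ((1 - s) *\<^sub>R z + s *\<^sub>R w) \<le> lam * ((1 - s) * \<phi> z + s * \<phi> w)"
      using lam by (rule mult_left_mono)
    have e: "y - ((1 - s) *\<^sub>R z + s *\<^sub>R w) = (y - z) - s *\<^sub>R (w - z)" by (simp add: algebra_simps)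
    have n: "(norm (y - ((1 - s) *\<^sub>R z + s *\<^sub>R w)))^2 = (norm (y - z))^2 - 2 * s * ((y - z) \<bullet> (w - z)) + s^2 * (norm (w - z))^2"
      unfolding e nsq_diff[of "y - z" "s *\<^sub>R (w - z)"] using s by (simp add: power_mult_distrib)
    from m c n have "s * (lam * (\<phi> z - \<phi> w) + (y - z) \<bullet> (w - z)) \<le> s * (s * ((norm (w - z))^2 / 2))"
      by (simp add: algebra_simps power2_eq_square)
    thus "lam * (\<phi> z - \<phi> w) + (y - z) \<bullet> (w - z) \<le> s * ((norm (w - z))^2 / 2)"
      using s by simp
  qed
  hence "lam * (\<phi> z - \<phi> w) \<le> (y - z) \<bullet> (z - w)"
    by (simp add: inner_diff_right)
  thus ?thesis by (simp add: z_def)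
qed

lemma prox_ineq:
  fixes \<phi> :: "'a::euclidean_space \<Rightarrow> real"
  assumes lip: "\<And>x y. \<bar>\<phi> x - \<phi> y\<bar> \<le> K * norm (x - y)" and K: "K \<ge> 0" and lam: "lam \<ge> 0"
    and cv: "convex_on UNIV \<phi>"
  shows "lam * \<phi> (prox lam \<phi> y) + (norm (y - prox lam \<phi> y))^2 / 2 + (norm (prox lam \<phi> y - w))^2 / 2
           \<le> lam * \<phi> w + (norm (y - w))^2 / 2"
proof -
  define z where "z = prox lam \<phi> y"
  have v: "lam * (\<phi> z - \<phi> w) \<le> (y - z) \<bullet> (z - w)"
    unfolding z_def by (rule prox_var[OF lip K lam cv])
  have "y - w = (y - z) + (z - w)" by simp
  hence "(norm (y - w))^2 = (norm (y - z))^2 + (norm (z - w))^2 + 2 * ((y - z) \<bullet> (z - w))"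
    using nsq_add[of "y - z" "z - w"] by simp
  with v show ?thesis unfolding z_def[symmetric] by (simp add: algebra_simps)
qed

lemma prox_nonexp:
  fixes \<phi> :: "'a::euclidean_space \<Rightarrow> real"
  assumes lip: "\<And>x y. \<bar>\<phi> x - \<phi> y\<bar> \<le> K * norm (x - y)" and K: "K \<ge> 0" and lam: "lam \<ge> 0"
    and cv: "convex_on UNIV \<phi>"
  shows "norm (prox lam \<phi> y1 - prox lam \<phi> y2) \<le> norm (y1 - y2)"
proof -
  define z1 where "z1 = prox lam \<phi> y1"
  define z2 where "z2 = prox lam \<phi> y2"
  have v1: "lam * (\<phi> z1 - \<phi> z2) \<le> (y1 - z1) \<bullet> (z1 - z2)"
    unfolding z1_def z2_def by (rule prox_var[OF lip K lam cv])
  have v2: "lam * (\<phi> z2 - \<phi> z1) \<le> (y2 - z2) \<bullet> (z2 - z1)"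
    unfolding z1_def z2_def by (rule prox_var[OF lip K lam cv])
  have "(y1 - z1) \<bullet> (z1 - z2) + (y2 - z2) \<bullet> (z2 - z1) = (y1 - y2) \<bullet> (z1 - z2) - (norm (z1 - z2))^2"
    by (simp add: power2_norm_eq_inner inner_diff_left inner_diff_right algebra_simps)
  with v1 v2 have "(norm (z1 - z2))^2 \<le> (y1 - y2) \<bullet> (z1 - z2)" by (simp add: algebra_simps)
  also have "\<dots> \<le> norm (y1 - y2) * norm (z1 - z2)" by (rule norm_cauchy_schwarz)
  finally have "norm (z1 - z2) * norm (z1 - z2) \<le> norm (y1 - y2) * norm (z1 - z2)"
    by (simp add: power2_eq_square)
  hence "norm (z1 - z2) \<le> norm (y1 - y2)"
    by (cases "norm (z1 - z2) = 0") (auto simp: mult_le_cancel_right)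
  thus ?thesis by (simp add: z1_def z2_def)
qed

lemma prox_cont:
  fixes \<phi> :: "'a::euclidean_space \<Rightarrow> real"
  assumes lip: "\<And>x y. \<bar>\<phi> x - \<phi> y\<bar> \<le> K * norm (x - y)" and K: "K \<ge> 0" and lam: "lam \<ge> 0"
    and cv: "convex_on UNIV \<phi>"
  shows "continuous_on UNIV (prox lam \<phi>)"
proof (rule lipschitz_on_continuous_on)
  show "1-lipschitz_on UNIV (prox lam \<phi>)"
    using prox_nonexp[OF lip K lam cv] by (auto simp: lipschitz_on_def dist_norm)
qed


locale rip =
  fixes D :: "'i measure"
    and f :: "'i \<Rightarrow> 'a::euclidean_space \<Rightarrow> real"
    and gradf :: "'i \<Rightarrow> 'a \<Rightarrow> 'a"
    and F :: "'a \<Rightarrow> real"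
    and g :: "nat \<Rightarrow> 'a \<Rightarrow> real"
    and m :: nat and L Lg :: real
    and xs :: 'a
  assumes D_prob: "prob_space D"
    and L_pos: "L > 0"
    and f_convex: "\<And>i. i \<in> space D \<Longrightarrow> convex_on UNIV (f i)"
    and f_grad: "\<And>i x. i \<in> space D \<Longrightarrow> (f i has_derivative (\<lambda>v. gradf i x \<bullet> v)) (at x)"
    and f_lipschitz: "\<And>i x y. i \<in> space D \<Longrightarrow> norm (gradf i x - gradf i y) \<le> L * norm (x - y)"
    and gradf_meas: "(\<lambda>(i, x). gradf i x) \<in> borel_measurable (D \<Otimes>\<^sub>M borel)"
    and F_exp: "\<And>x. integrable D (\<lambda>i. f i x) \<and> F x = (\<integral>i. f i x \<partial>D)"
    and F_grad: "\<And>x. integrable D (\<lambda>i. gradf i x) \<and>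
                  (F has_derivative (\<lambda>v. (\<integral>i. gradf i x \<partial>D) \<bullet> v)) (at x)"
    and m_pos: "m \<ge> 1"
    and g_convex: "\<And>j. j \<in> {1..m} \<Longrightarrow> convex_on UNIV (g j)"
    and g_lipschitz: "\<And>j x y. j \<in> {1..m} \<Longrightarrow> \<bar>g j x - g j y\<bar> \<le> Lg * norm (x - y)"
    and xs_min: "\<And>y. F xs + (\<Sum>j=1..m. g j xs) \<le> F y + (\<Sum>j=1..m. g j y)"
    and sigma_fin: "integrable D (\<lambda>i. (norm (gradf i xs))^2)"
begin

definition "GF x = (\<integral>i. gradf i x \<partial>D)"
definition "G x = (\<Sum>j=1..m. g j x)"
definition "h x = F x + G x"
definition "sig2 = (\<integral>i. (norm (gradf i xs))^2 \<partial>D)"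

lemma Dp: "prob_space D" by (rule D_prob)

lemma Lg_nonneg: "Lg \<ge> 0"
proof -
  obtain v :: 'a where v: "v \<in> Basis" using nonempty_Basis by blast
  have "\<bar>g 1 v - g 1 0\<bar> \<le> Lg * norm (v - 0)" using g_lipschitz[of 1 v 0] m_pos by simp
  hence "0 \<le> Lg * norm v" by simp
  moreover have "norm v = 1" using v by simp
  ultimately show ?thesis by simp
qed

lemma gradf_meas_i[measurable]: "(\<lambda>i. gradf i x) \<in> borel_measurable D"
proof -
  have "(\<lambda>i. (i, x)) \<in> measurable D (D \<Otimes>\<^sub>M borel)" by measurable
  from measurable_compose[OF this gradf_meas] show ?thesis by simp
qed

lemma F_der: "(F has_derivative (\<lambda>v. GF x \<bullet> v)) (at x)"
  using F_grad unfolding GF_def by blast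

lemma gradf_int: "integrable D (\<lambda>i. gradf i x)" using F_grad by blast
lemma f_int: "integrable D (\<lambda>i. f i x)" using F_exp by blast
lemma F_eq: "F x = (\<integral>i. f i x \<partial>D)" using F_exp by blast

lemma GF_lip: "norm (GF x - GF y) \<le> L * norm (x - y)"
proof -
  interpret D: prob_space D by (rule Dp)
  have "GF x - GF y = (\<integral>i. gradf i x - gradf i y \<partial>D)"
    unfolding GF_def by (rule Bochner_Integration.integral_diff[symmetric]) (auto intro: gradf_int)
  hence "norm (GF x - GF y) \<le> (\<integral>i. norm (gradf i x - gradf i y) \<partial>D)"
    by (simp add: integral_norm_bound)
  also have "\<dots> \<le> (\<integral>i. L * norm (x - y) \<partial>D)"
    by (rule integral_mono) (auto intro!: gradf_int f_lipschitz)
  also have "\<dots> = L * norm (x - y)" by (simp add: D.prob_space)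
  finally show ?thesis .
qed

lemma F_descent: "\<bar>F y - F x - GF x \<bullet> (y - x)\<bar> \<le> L/2 * (norm (y - x))^2"
  by (rule descent2[OF F_der GF_lip])

lemma F_convex: "convex_on UNIV F"
proof (rule convex_onI)
  interpret D: prob_space D by (rule Dp)
  fix t :: real and x y :: 'a assume t: "0 < t" "t < 1"
  have "F ((1 - t) *\<^sub>R x + t *\<^sub>R y) = (\<integral>i. f i ((1 - t) *\<^sub>R x + t *\<^sub>R y) \<partial>D)" by (rule F_eq)
  also have "\<dots> \<le> (\<integral>i. (1 - t) * f i x + t * f i y \<partial>D)"
    using t by (intro integral_mono convex_onD[OF f_convex])
      (auto intro!: f_int Bochner_Integration.integrable_add integrable_mult_right)
  also have "\<dots> = (1 - t) * F x + t * F y"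
    by (simp add: F_eq f_int)
  finally show "F ((1 - t) *\<^sub>R x + t *\<^sub>R y) \<le> (1 - t) * F x + t * F y" .
qed simp

lemma G_convex: "convex_on UNIV G"
proof -
  have "convex_on UNIV (\<lambda>x. \<Sum>j\<in>A. g j x)" if "finite A" "A \<subseteq> {1..m}" for A
    using that
  proof (induction A rule: finite_induct)
    case empty thus ?case by (simp add: convex_on_const)
  next
    case (insert a A)
    hence "convex_on UNIV (\<lambda>x. g a x + (\<Sum>j\<in>A. g j x))"
      by (intro convex_on_add g_convex) auto
    thus ?case using insert by simp
  qed
  from this[of "{1..m}"] show ?thesis unfolding G_def[abs_def] by simp
qed

lemma G_lip: "\<bar>G x - G y\<bar> \<le> real m * Lg * norm (x - y)"
proof -
  have "\<bar>G x - G y\<bar> = \<bar>\<Sum>j=1..m. g j x - g j y\<bar>" by (simp add: G_def sum_subtractf)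
  also have "\<dots> \<le> (\<Sum>j=1..m. \<bar>g j x - g j y\<bar>)" by (rule sum_abs)
  also have "\<dots> \<le> (\<Sum>j=1..m. Lg * norm (x - y))" by (intro sum_mono g_lipschitz) auto
  finally show ?thesis by simp
qed

lemma h_convex: "convex_on UNIV h"
proof -
  have "convex_on UNIV (\<lambda>x. F x + G x)" by (intro convex_on_add F_convex G_convex)
  thus ?thesis by (simp add: h_def[abs_def])
qed

lemma g_cont: "j \<in> {1..m} \<Longrightarrow> continuous_on UNIV (g j)"
  by (rule lip_cont[OF g_lipschitz Lg_nonneg])

lemma h_cont: "continuous_on UNIV h"
proof -
  have "continuous_on UNIV F"
    using F_der by (intro has_derivative_continuous_on) blast
  moreover have "continuous_on UNIV G"
    unfolding G_def[abs_def] by (intro continuous_intros g_cont) auto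
  ultimately show ?thesis unfolding h_def[abs_def] by (intro continuous_intros)
qed

lemma h_meas[measurable]: "h \<in> borel_measurable borel"
  using h_cont by (rule borel_measurable_continuous_onI)

lemma h_ge: "h xs \<le> h x"
  using xs_min[of x] by (simp add: h_def G_def)

lemma opt: "0 \<le> G x - G xs + GF xs \<bullet> (x - xs)"
proof -
  define d where "d = x - xs"
  have "-(G x - G xs + GF xs \<bullet> d) \<le> 0"
  proof (rule le0_by_small[where B = "L/2 * (norm d)^2"])
    fix s :: real assume s: "0 < s" "s \<le> 1"
    have e: "(1 - s) *\<^sub>R xs + s *\<^sub>R x = xs + s *\<^sub>R d" by (simp add: d_def algebra_simps)
    have "G ((1 - s) *\<^sub>R xs + s *\<^sub>R x) \<le> (1 - s) * G xs + s * G x"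
      using s by (intro convex_onD[OF G_convex]) auto
    hence g1: "G (xs + s *\<^sub>R d) \<le> (1 - s) * G xs + s * G x" by (simp add: e)
    have "\<bar>F (xs + s *\<^sub>R d) - F xs - GF xs \<bullet> ((xs + s *\<^sub>R d) - xs)\<bar> \<le> L/2 * (norm ((xs + s *\<^sub>R d) - xs))^2"
      by (rule F_descent)
    hence A: "\<bar>F (xs + s *\<^sub>R d) - F xs - s * (GF xs \<bullet> d)\<bar> \<le> L/2 * (s^2 * (norm d)^2)"
      using s by (simp add: power_mult_distrib)
    hence f1: "F (xs + s *\<^sub>R d) \<le> F xs + s * (GF xs \<bullet> d) + L/2 * (s^2 * (norm d)^2)"
      by (simp only: abs_le_iff) linarith
    have g2: "G (xs + s *\<^sub>R d) \<le> G xs + s * (G x - G xs)" using g1 by (simp add: algebra_simps)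
    have "h xs \<le> h (xs + s *\<^sub>R d)" by (rule h_ge)
    with g2 f1 have "0 \<le> s * (G x - G xs) + s * (GF xs \<bullet> d) + L/2 * (s^2 * (norm d)^2)"
      unfolding h_def by linarith
    hence "0 \<le> s * ((G x - G xs + GF xs \<bullet> d) + s * (L/2 * (norm d)^2))"
      by (simp add: algebra_simps power2_eq_square)
    hence "0 \<le> (G x - G xs + GF xs \<bullet> d) + s * (L/2 * (norm d)^2)"
      using s by (simp add: zero_le_mult_iff)
    thus "-(G x - G xs + GF xs \<bullet> d) \<le> s * (L/2 * (norm d)^2)" by simp
  qed
  thus ?thesis by (simp add: d_def)
qed

lemma sq_int: "integrable D (\<lambda>i. (norm (gradf i x))^2)"
proof (rule Bochner_Integration.integrable_bound)
  interpret D: prob_space D by (rule Dp)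
  show "integrable D (\<lambda>i. 2 * (L * norm (x - xs))^2 + 2 * (norm (gradf i xs))^2)"
    using sigma_fin by simp
  show "(\<lambda>i. (norm (gradf i x))^2) \<in> borel_measurable D" by measurable
  show "AE i in D. norm ((norm (gradf i x))^2) \<le> norm (2 * (L * norm (x - xs))^2 + 2 * (norm (gradf i xs))^2)"
  proof (rule AE_I2)
    fix i assume i: "i \<in> space D"
    have "norm (gradf i x) \<le> norm (gradf i x - gradf i xs) + norm (gradf i xs)"
      using norm_triangle_ineq[of "gradf i x - gradf i xs" "gradf i xs"] by simp
    also have "\<dots> \<le> L * norm (x - xs) + norm (gradf i xs)" using f_lipschitz[OF i] by simp
    finally have a: "norm (gradf i x) \<le> L * norm (x - xs) + norm (gradf i xs)" .
    have "(norm (gradf i x))^2 \<le> (L * norm (x - xs) + norm (gradf i xs))^2"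
      using a by (intro power_mono) auto
    also have "\<dots> \<le> 2 * (L * norm (x - xs))^2 + 2 * (norm (gradf i xs))^2"
      using sum_squares_bound[of "L * norm (x - xs)" "norm (gradf i xs)"] 
      by (simp add: power2_eq_square algebra_simps)
    finally show "norm ((norm (gradf i x))^2) \<le> norm (2 * (L * norm (x - xs))^2 + 2 * (norm (gradf i xs))^2)"
      by simp
  qed
qed

lemma var_bound: "(\<integral>i. (norm (gradf i x - GF x))^2 \<partial>D) \<le> 4*L*(h x - h xs) + 2 * sig2"
proof -
  interpret D: prob_space D by (rule Dp)
  have a: "integrable D (\<lambda>i. (norm (gradf i x))^2)" by (rule sq_int)
  have b: "integrable D (\<lambda>i. 2 * (gradf i x \<bullet> GF x))" using gradf_int by auto
  have "(\<integral>i. (norm (gradf i x - GF x))^2 \<partial>D) = (\<integral>i. ((norm (gradf i x))^2 - 2 * (gradf i x \<bullet> GF x)) + (norm (GF x))^2 \<partial>D)"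
    by (simp add: nsq_diff)
  also have "\<dots> = (\<integral>i. (norm (gradf i x))^2 \<partial>D) - (\<integral>i. 2 * (gradf i x \<bullet> GF x) \<partial>D) + (norm (GF x))^2"
    using a b by (simp add: D.prob_space)
  also have "(\<integral>i. 2 * (gradf i x \<bullet> GF x) \<partial>D) = 2 * (GF x \<bullet> GF x)"
    using gradf_int by (simp add: GF_def)
  finally have i1: "(\<integral>i. (norm (gradf i x - GF x))^2 \<partial>D) \<le> (\<integral>i. (norm (gradf i x))^2 \<partial>D)"
    by (simp add: power2_norm_eq_inner)
  have pw: "(norm (gradf i x))^2 \<le> 4*L*(f i x - f i xs - gradf i xs \<bullet> (x - xs)) + 2 * (norm (gradf i xs))^2"
    if i: "i \<in> space D" for i
  proof -
    have cc: "(norm (gradf i x - gradf i xs))^2 \<le> 2 * L * (f i x - f i xs - gradf i xs \<bullet> (x - xs))"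
      by (rule cocoercive[OF f_convex[OF i] f_grad[OF i] f_lipschitz[OF i] L_pos])
    have "norm (gradf i x) \<le> norm (gradf i x - gradf i xs) + norm (gradf i xs)"
      using norm_triangle_ineq[of "gradf i x - gradf i xs" "gradf i xs"] by simp
    hence "(norm (gradf i x))^2 \<le> (norm (gradf i x - gradf i xs) + norm (gradf i xs))^2"
      by (intro power_mono) auto
    also have "\<dots> \<le> 2 * (norm (gradf i x - gradf i xs))^2 + 2 * (norm (gradf i xs))^2"
      using sum_squares_bound[of "norm (gradf i x - gradf i xs)" "norm (gradf i xs)"]
      by (simp add: power2_eq_square algebra_simps)
    finally show ?thesis using cc by simp
  qed
  have c: "integrable D (\<lambda>i. 4*L*(f i x - f i xs - gradf i xs \<bullet> (x - xs)) + 2 * (norm (gradf i xs))^2)"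
    using f_int gradf_int sigma_fin by auto
  have "(\<integral>i. (norm (gradf i x))^2 \<partial>D) \<le> (\<integral>i. 4*L*(f i x - f i xs - gradf i xs \<bullet> (x - xs)) + 2 * (norm (gradf i xs))^2 \<partial>D)"
    by (rule integral_mono[OF a c pw])
  also have "\<dots> = 4*L*(F x - F xs - GF xs \<bullet> (x - xs)) + 2 * sig2"
    using f_int gradf_int sigma_fin by (simp add: F_eq GF_def sig2_def)
  also have "\<dots> \<le> 4*L*(h x - h xs) + 2 * sig2"
    using opt[of x] L_pos by (simp add: h_def)
  finally show ?thesis using i1 by simp
qed

end


context rip begin

definition "cl j = (if j \<in> {1..m} then j else 1)"
definition "step \<tau> j i x = prox (\<tau> * real m) (g (cl j)) (x - \<tau> *\<^sub>R gradf i x)"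

lemma cl_in: "cl j \<in> {1..m}" using m_pos by (auto simp: cl_def)
lemma cl_id: "j \<in> {1..m} \<Longrightarrow> cl j = j" by (simp add: cl_def)

lemma step_pw:
  assumes i: "i \<in> space D" and j: "j \<in> {1..m}" and tau: "0 < \<tau>" "\<tau> * L \<le> 1/5"
  shows "2*\<tau>*(h (step \<tau> j i x) - h xs) + (norm (step \<tau> j i x - u))^2
     \<le> (norm (x - u))^2 + 2*\<tau>*(h u - h xs) + 2*\<tau>^2*(norm (gradf i x - GF x))^2 + 16*\<tau>^2*(real m)^2*Lg^2
        + 2*\<tau>*((real m * g j u - G u) - (real m * g j x - G x) + (f i u - F u) - (f i x - F x))"
proof -
  define M where "M = real m"
  define x' where "x' = step \<tau> j i x"
  define y where "y = x - \<tau> *\<^sub>R gradf i x"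
  define d where "d = x' - x"
  define e where "e = gradf i x - GF x"
  have x'_def2: "x' = prox (\<tau> * M) (g j) y" by (simp add: x'_def step_def cl_id[OF j] M_def y_def)
  have lam: "\<tau> * M \<ge> 0" using tau by (simp add: M_def)
  have P0: "(\<tau> * M) * g j x' + (norm (y - x'))^2 / 2 + (norm (x' - u))^2 / 2 \<le> (\<tau> * M) * g j u + (norm (y - u))^2 / 2"
    unfolding x'_def2 by (rule prox_ineq[OF g_lipschitz[OF j] Lg_nonneg lam g_convex[OF j]])
  have P: "2 * ((\<tau> * M) * g j x') + (norm (y - x'))^2 + (norm (x' - u))^2 \<le> 2 * ((\<tau> * M) * g j u) + (norm (y - u))^2"
    using P0 by simp
  define a1 where "a1 = gradf i x \<bullet> (x - u)"
  define a2 where "a2 = GF x \<bullet> d"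
  define a3 where "a3 = e \<bullet> d"
  have yu: "y - u = (x - u) - \<tau> *\<^sub>R gradf i x" by (simp add: y_def)
  have yx': "y - x' = (x - x') - \<tau> *\<^sub>R gradf i x" by (simp add: y_def)
  have n1: "(norm (y - u))^2 = (norm (x - u))^2 - 2 * (\<tau> * ((x - u) \<bullet> gradf i x)) + (norm (\<tau> *\<^sub>R gradf i x))^2"
    unfolding yu nsq_diff by simp
  have n2: "(norm (y - x'))^2 = (norm (x - x'))^2 - 2 * (\<tau> * ((x - x') \<bullet> gradf i x)) + (norm (\<tau> *\<^sub>R gradf i x))^2"
    unfolding yx' nsq_diff by simp
  have i1: "(x - u) \<bullet> gradf i x = a1" by (simp add: a1_def inner_commute)
  have i2: "(x - x') \<bullet> gradf i x = -(a2 + a3)"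
    by (simp add: a2_def a3_def d_def e_def inner_diff_left inner_diff_right inner_commute)
  have nd: "norm (x - x') = norm d" by (simp add: d_def norm_minus_commute)
  have n1': "(norm (y - u))^2 = (norm (x - u))^2 - 2*(\<tau>*a1) + (norm (\<tau> *\<^sub>R gradf i x))^2"
    using n1 i1 by simp
  have n2': "(norm (y - x'))^2 = (norm d)^2 + 2*(\<tau>*a2) + 2*(\<tau>*a3) + (norm (\<tau> *\<^sub>R gradf i x))^2"
  proof -
    have "\<tau>*(-(a2+a3)) = -(\<tau>*a2) - \<tau>*a3" by (simp add: algebra_simps)
    with n2 show ?thesis unfolding i2 nd by linarith
  qed
  have Id: "(norm (y - u))^2 - (norm (y - x'))^2 = (norm (x - u))^2 - (norm d)^2 - 2 * (\<tau> * a1) - 2 * (\<tau> * a2) - 2 * (\<tau> * a3)"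
    using n1' n2' by linarith
  have "f i x + gradf i x \<bullet> (u - x) \<le> f i u"
    by (rule grad_ineq[OF f_convex[OF i] f_grad[OF i] f_lipschitz[OF i]])
  hence "f i x - a1 \<le> f i u" by (simp add: a1_def inner_diff_right)
  hence fa0: "f i x - a1 \<le> f i u" by simp
  have Fa: "\<tau> * f i x - \<tau> * a1 \<le> \<tau> * f i u"
    using mult_left_mono[OF fa0, of \<tau>] tau by (simp add: right_diff_distrib)
  have "\<bar>F x' - F x - GF x \<bullet> (x' - x)\<bar> \<le> L/2 * (norm (x' - x))^2" by (rule F_descent)
  hence fb0: "F x' \<le> F x + a2 + L/2 * (norm d)^2" unfolding a2_def d_def by (simp only: abs_le_iff) linarith
  have "\<tau> * F x' \<le> \<tau> * F x + \<tau> * a2 + (\<tau> * L)/2 * (norm d)^2"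
    using mult_left_mono[OF fb0, of \<tau>] tau by (simp add: distrib_left)
  moreover have "(\<tau> * L)/2 * (norm d)^2 \<le> (1/10) * (norm d)^2"
    using tau by (intro mult_right_mono) (auto simp: algebra_simps)
  ultimately have Fb: "\<tau> * F x' \<le> \<tau> * F x + \<tau> * a2 + (1/10) * (norm d)^2" by linarith
  have "0 \<le> (norm ((2 * \<tau>) *\<^sub>R e + d))^2" by simp
  hence Fc: "- 2 * (\<tau> * a3) \<le> 2 * \<tau>^2 * (norm e)^2 + (1/2) * (norm d)^2"
    unfolding nsq_add by (simp add: a3_def power_mult_distrib algebra_simps)
  have "\<bar>G x' - G x\<bar> \<le> M * Lg * norm (x' - x)" using G_lip by (simp add: M_def)
  hence gd0: "G x' \<le> G x + M * Lg * norm d" unfolding d_def by (simp only: abs_le_iff) linarith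
  have Gd1: "\<tau> * G x' \<le> \<tau> * G x + \<tau> * M * Lg * norm d"
    using mult_left_mono[OF gd0, of \<tau>] tau by (simp add: distrib_left mult.assoc)
  have "\<bar>g j x - g j x'\<bar> \<le> Lg * norm (x - x')" by (rule g_lipschitz[OF j])
  hence gd2: "g j x \<le> g j x' + Lg * norm d" unfolding d_def norm_minus_commute[of x] by (simp only: abs_le_iff) linarith
  have Gd2: "(\<tau> * M) * g j x \<le> (\<tau> * M) * g j x' + \<tau> * M * Lg * norm d"
    using mult_left_mono[OF gd2 lam] by (simp add: distrib_left mult.assoc)
  have "0 \<le> ((1/2) * norm d - 4 * (\<tau> * M * Lg))^2" by simp
  hence Ee: "4 * (\<tau> * M * Lg * norm d) \<le> (1/4) * (norm d)^2 + 16 * \<tau>^2 * M^2 * Lg^2"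
    by (simp add: power2_eq_square algebra_simps)
  have main: "2 * (\<tau> * F x') + 2 * (\<tau> * G x') + (norm (x' - u))^2 \<le> (norm (x - u))^2 + 2 * \<tau>^2 * (norm e)^2 + 16 * \<tau>^2 * M^2 * Lg^2
     + 2 * ((\<tau> * M) * g j u) - 2 * ((\<tau> * M) * g j x) + 2 * (\<tau> * G x) + 2 * (\<tau> * f i u) - 2 * (\<tau> * f i x) + 2 * (\<tau> * F x)"
    using P Id Fa Fb Fc Gd1 Gd2 Ee zero_le_power2[of "norm d"] by linarith
  thus ?thesis
    by (simp add: h_def x'_def[symmetric] e_def[symmetric] M_def[symmetric] algebra_simps)
qed

end


context rip begin

abbreviation "U \<equiv> measure_pmf (pmf_of_set {1..m})"
abbreviation "Q \<equiv> D \<Otimes>\<^sub>M U"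

lemma prox_meas: "\<tau> \<ge> 0 \<Longrightarrow> prox (\<tau> * real m) (g (cl k)) \<in> borel_measurable borel"
  by (intro borel_measurable_continuous_onI prox_cont[OF g_lipschitz[OF cl_in] Lg_nonneg _ g_convex[OF cl_in]]) simp

lemma step_meas:
  assumes tau: "\<tau> \<ge> 0" and a: "a \<in> borel_measurable N" and b: "b \<in> measurable N D"
    and c: "c \<in> measurable N (count_space UNIV)"
  shows "(\<lambda>\<omega>. step \<tau> (c \<omega>) (b \<omega>) (a \<omega>)) \<in> borel_measurable N"
proof (rule measurable_compose_countable[where f = "\<lambda>k \<omega>. step \<tau> k (b \<omega>) (a \<omega>)", OF _ c])
  fix k :: nat
  have gm: "(\<lambda>\<omega>. gradf (b \<omega>) (a \<omega>)) \<in> borel_measurable N"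
    using measurable_compose[OF measurable_Pair[OF b a] gradf_meas] by simp
  have "(\<lambda>\<omega>. a \<omega> - \<tau> *\<^sub>R gradf (b \<omega>) (a \<omega>)) \<in> borel_measurable N"
    using a gm by measurable
  from measurable_compose[OF this prox_meas[OF tau, of k]]
  show "(\<lambda>\<omega>. step \<tau> k (b \<omega>) (a \<omega>)) \<in> borel_measurable N"
    by (simp add: step_def)
qed

lemma snd_meas: "snd \<in> measurable (M1 \<Otimes>\<^sub>M U) (count_space UNIV)"
proof -
  have "snd \<in> measurable (M1 \<Otimes>\<^sub>M U) U" by (rule measurable_snd)
  thus ?thesis by (simp add: measurable_cong_sets[OF refl sets_measure_pmf_count_space])
qed

lemma sum_g: "(\<Sum>j=1..m. g j v) = G v" by (simp add: G_def)

lemma inner_int: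
  assumes tau: "0 < \<tau>" "\<tau> * L \<le> 1/5" and r: "r \<ge> 0" and w: "w \<ge> 0"
  shows "(\<integral>\<^sup>+q. ennreal (r + w * (2*\<tau>*(h (step \<tau> (snd q) (fst q) x) - h xs) + (norm (step \<tau> (snd q) (fst q) x - u))^2)) \<partial>Q)
     \<le> ennreal (r + w * ((norm (x - u))^2 + 2*\<tau>*(h u - h xs) + 8*\<tau>^2*L*(h x - h xs) + \<tau>^2*(4 * sig2 + 16*(real m)^2*Lg^2)))"
proof -
  interpret D: prob_space D by (rule Dp)
  interpret U: prob_space U by (rule prob_space_measure_pmf)
  have fin: "finite {1..m}" and ne: "{1..m} \<noteq> {}" using m_pos by auto
  define Y where "Y q = r + w * (2*\<tau>*(h (step \<tau> (snd q) (fst q) x) - h xs) + (norm (step \<tau> (snd q) (fst q) x - u))^2)" for q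
  define B where "B i = (norm (x - u))^2 + 2*\<tau>*(h u - h xs) + 2*\<tau>^2*(norm (gradf i x - GF x))^2 + 16*\<tau>^2*(real m)^2*Lg^2
        + 2*\<tau>*((f i u - F u) - (f i x - F x))" for i
  have Ym: "(\<lambda>q. ennreal (Y q)) \<in> borel_measurable Q"
  proof -
    have "(\<lambda>q. step \<tau> (snd q) (fst q) x) \<in> borel_measurable Q"
      by (rule step_meas) (use tau in \<open>auto intro: snd_meas\<close>)
    thus ?thesis unfolding Y_def by measurable
  qed
  have Ynn: "0 \<le> Y q" for q
    unfolding Y_def using r w tau h_ge by (intro add_nonneg_nonneg mult_nonneg_nonneg) auto
  have avg: "(\<Sum>j\<in>{1..m}. Y (i, j)) / real m \<le> r + w * B i" if i: "i \<in> space D" for i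
  proof -
    have "(\<Sum>j\<in>{1..m}. Y (i, j)) \<le> (\<Sum>j\<in>{1..m}. r + w * (B i + 2*\<tau>*((real m * g j u - G u) - (real m * g j x - G x))))"
    proof (rule sum_mono)
      fix j assume j: "j \<in> {1..m}"
      have "2*\<tau>*(h (step \<tau> j i x) - h xs) + (norm (step \<tau> j i x - u))^2 \<le> B i + 2*\<tau>*((real m * g j u - G u) - (real m * g j x - G x))"
        using step_pw[OF i j tau, of x u] by (simp add: B_def algebra_simps)
      from mult_left_mono[OF this w]
      show "Y (i, j) \<le> r + w * (B i + 2*\<tau>*((real m * g j u - G u) - (real m * g j x - G x)))"
        unfolding Y_def fst_conv snd_conv by linarith
    qed
    also have "\<dots> = (\<Sum>j\<in>{1..m}. (r + w * B i - 2*\<tau>*w*(G u - G x)) + (2*\<tau>*w*real m) * (g j u - g j x))"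
      by (rule sum.cong) (simp_all add: algebra_simps)
    also have "\<dots> = real m * (r + w * B i - 2*\<tau>*w*(G u - G x)) + (2*\<tau>*w*real m) * ((\<Sum>j\<in>{1..m}. g j u) - (\<Sum>j\<in>{1..m}. g j x))"
      by (simp add: sum.distrib sum_distrib_left[symmetric] sum_subtractf)
    also have "\<dots> = real m * (r + w * B i)" unfolding sum_g by (simp add: algebra_simps)
    finally have "(\<Sum>j\<in>{1..m}. Y (i, j)) \<le> real m * (r + w * B i)" .
    thus ?thesis using m_pos by (simp add: divide_le_eq mult.commute)
  qed
  have Bnn: "0 \<le> r + w * B i" if i: "i \<in> space D" for i
  proof -
    have "0 \<le> (\<Sum>j\<in>{1..m}. Y (i, j)) / real m" using Ynn by (simp add: sum_nonneg)
    with avg[OF i] show ?thesis by linarith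
  qed
  have pw: "(\<integral>\<^sup>+j. ennreal (Y (i, j)) \<partial>U) \<le> ennreal (r + w * B i)" if i: "i \<in> space D" for i
  proof -
    have "(\<integral>\<^sup>+j. ennreal (Y (i, j)) \<partial>U) = (\<Sum>j\<in>{1..m}. ennreal (Y (i, j))) / ennreal (real (card {1..m}))"
      by (subst nn_integral_pmf_of_set[OF ne fin]) (simp add: ennreal_of_nat_eq_real_of_nat)
    also have "\<dots> = ennreal ((\<Sum>j\<in>{1..m}. Y (i, j)) / real m)"
      using m_pos Ynn by (subst sum_ennreal) (auto intro!: divide_ennreal sum_nonneg)
    also have "\<dots> \<le> ennreal (r + w * B i)"
      by (rule ennreal_leI[OF avg[OF i]])
    finally show ?thesis .
  qed
  have "(\<integral>\<^sup>+q. ennreal (Y q) \<partial>Q) = (\<integral>\<^sup>+i. (\<integral>\<^sup>+j. ennreal (Y (i, j)) \<partial>U) \<partial>D)"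
    by (rule sigma_finite_measure.nn_integral_fst[OF prob_space_imp_sigma_finite[OF prob_space_measure_pmf] Ym, symmetric])
  also have "\<dots> \<le> (\<integral>\<^sup>+i. ennreal (r + w * B i) \<partial>D)"
    by (intro nn_integral_mono pw)
  also have "\<dots> = ennreal (\<integral>i. r + w * B i \<partial>D)"
  proof (rule nn_integral_eq_integral)
    have e2: "integrable D (\<lambda>i. (norm (gradf i x - GF x))^2)"
    proof -
      have "integrable D (\<lambda>i. (norm (gradf i x))^2 - 2*(gradf i x \<bullet> GF x) + (norm (GF x))^2)"
        using sq_int gradf_int by auto
      thus ?thesis by (simp add: nsq_diff)
    qed
    show "integrable D (\<lambda>i. r + w * B i)"
      unfolding B_def using e2 f_int by auto
    show "AE i in D. 0 \<le> r + w * B i" using Bnn by auto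
  qed
  also have "(\<integral>i. r + w * B i \<partial>D) = r + w * ((norm (x - u))^2 + 2*\<tau>*(h u - h xs) + 2*\<tau>^2*(\<integral>i. (norm (gradf i x - GF x))^2 \<partial>D) + 16*\<tau>^2*(real m)^2*Lg^2)"
  proof -
    have e2: "integrable D (\<lambda>i. (norm (gradf i x - GF x))^2)"
    proof -
      have "integrable D (\<lambda>i. (norm (gradf i x))^2 - 2*(gradf i x \<bullet> GF x) + (norm (GF x))^2)"
        using sq_int gradf_int by auto
      thus ?thesis by (simp add: nsq_diff)
    qed
    show ?thesis unfolding B_def using e2 f_int by (simp add: D.prob_space F_eq[symmetric])
  qed
  also have "ennreal (r + w * ((norm (x - u))^2 + 2*\<tau>*(h u - h xs) + 2*\<tau>^2*(\<integral>i. (norm (gradf i x - GF x))^2 \<partial>D) + 16*\<tau>^2*(real m)^2*Lg^2))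
     \<le> ennreal (r + w * ((norm (x - u))^2 + 2*\<tau>*(h u - h xs) + 8*\<tau>^2*L*(h x - h xs) + \<tau>^2*(4 * sig2 + 16*(real m)^2*Lg^2)))"
  proof (intro ennreal_leI add_left_mono mult_left_mono w)
    have "2*\<tau>^2*(\<integral>i. (norm (gradf i x - GF x))^2 \<partial>D) \<le> 2*\<tau>^2*(4*L*(h x - h xs) + 2 * sig2)"
      by (intro mult_left_mono var_bound) auto
    thus "(norm (x - u))^2 + 2*\<tau>*(h u - h xs) + 2*\<tau>^2*(\<integral>i. (norm (gradf i x - GF x))^2 \<partial>D) + 16*\<tau>^2*(real m)^2*Lg^2
       \<le> (norm (x - u))^2 + 2*\<tau>*(h u - h xs) + 8*\<tau>^2*L*(h x - h xs) + \<tau>^2*(4 * sig2 + 16*(real m)^2*Lg^2)"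
      by (simp add: algebra_simps)
  qed
  finally show ?thesis unfolding Y_def .
qed

end


lemma pim_step:
  fixes Q :: "'b measure" and I :: "nat set"
  assumes Qp: "prob_space Q" and fin: "finite I" and t: "k \<in> I"
    and Psm: "Ps \<in> borel_measurable (PiM I (\<lambda>_. Q))"
    and Phm: "Ph \<in> borel_measurable (PiM I (\<lambda>_. Q))"
    and Phnd: "\<And>\<omega> y. \<omega> \<in> space (PiM I (\<lambda>_. Q)) \<Longrightarrow> y \<in> space Q \<Longrightarrow> Ph ((fun_upd \<omega> k y)) = Ph \<omega>"
    and bnd: "\<And>\<omega>. \<omega> \<in> space (PiM I (\<lambda>_. Q)) \<Longrightarrow> (\<integral>\<^sup>+y. Ps ((fun_upd \<omega> k y)) \<partial>Q) \<le> Ph \<omega>"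
  shows "(\<integral>\<^sup>+\<omega>. Ps \<omega> \<partial>PiM I (\<lambda>_. Q)) \<le> (\<integral>\<^sup>+\<omega>. Ph \<omega> \<partial>PiM I (\<lambda>_. Q))"
proof -
  interpret Q: prob_space Q by (rule Qp)
  interpret PS: product_sigma_finite "\<lambda>_::nat. Q"
    by (simp add: product_sigma_finite_def prob_space_imp_sigma_finite[OF Qp])
  define J where "J = I - {k}"
  have IJ: "I = insert k J" and tJ: "k \<notin> J" and finJ: "finite J" using t fin by (auto simp: J_def)
  obtain y0 where y0: "y0 \<in> space Q" using Q.not_empty by blast
  have upd: "(fun_upd \<omega> k y0) \<in> space (PiM I (\<lambda>_. Q))" if "\<omega> \<in> space (PiM J (\<lambda>_. Q))" for \<omega>
    using that y0 unfolding IJ space_PiM by (intro PiE_fun_upd) auto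
  have "(\<integral>\<^sup>+\<omega>. Ps \<omega> \<partial>PiM I (\<lambda>_. Q)) = (\<integral>\<^sup>+\<omega>. (\<integral>\<^sup>+y. Ps ((fun_upd \<omega> k y)) \<partial>Q) \<partial>PiM J (\<lambda>_. Q))"
    unfolding IJ by (rule PS.product_nn_integral_insert[OF finJ tJ]) (use Psm IJ in simp)
  also have "\<dots> \<le> (\<integral>\<^sup>+\<omega>. Ph ((fun_upd \<omega> k y0)) \<partial>PiM J (\<lambda>_. Q))"
  proof (rule nn_integral_mono)
    fix \<omega> assume w: "\<omega> \<in> space (PiM J (\<lambda>_. Q))"
    have "(\<integral>\<^sup>+y. Ps ((fun_upd \<omega> k y)) \<partial>Q) = (\<integral>\<^sup>+y. Ps ((fun_upd (fun_upd \<omega> k y0) k y)) \<partial>Q)" by simp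
    also have "\<dots> \<le> Ph ((fun_upd \<omega> k y0))" by (rule bnd[OF upd[OF w]])
    finally show "(\<integral>\<^sup>+y. Ps ((fun_upd \<omega> k y)) \<partial>Q) \<le> Ph ((fun_upd \<omega> k y0))" .
  qed
  also have "\<dots> = (\<integral>\<^sup>+\<omega>. (\<integral>\<^sup>+y. Ph ((fun_upd \<omega> k y)) \<partial>Q) \<partial>PiM J (\<lambda>_. Q))"
  proof (rule nn_integral_cong)
    fix \<omega> assume w: "\<omega> \<in> space (PiM J (\<lambda>_. Q))"
    have "(\<integral>\<^sup>+y. Ph ((fun_upd \<omega> k y)) \<partial>Q) = (\<integral>\<^sup>+y. Ph ((fun_upd \<omega> k y0)) \<partial>Q)"
    proof (rule nn_integral_cong)
      fix y assume "y \<in> space Q"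
      thus "Ph ((fun_upd \<omega> k y)) = Ph ((fun_upd \<omega> k y0))" using Phnd[OF upd[OF w], of y] by simp
    qed
    also have "\<dots> = Ph ((fun_upd \<omega> k y0))" by (simp add: Q.emeasure_space_1)
    finally show "Ph ((fun_upd \<omega> k y0)) = (\<integral>\<^sup>+y. Ph ((fun_upd \<omega> k y)) \<partial>Q)" by simp
  qed
  also have "\<dots> = (\<integral>\<^sup>+\<omega>. Ph \<omega> \<partial>PiM I (\<lambda>_. Q))"
    unfolding IJ by (rule PS.product_nn_integral_insert[OF finJ tJ, symmetric]) (use Phm IJ in simp)
  finally show ?thesis .
qed

primrec pth :: "('b \<Rightarrow> 'a \<Rightarrow> 'a) \<Rightarrow> 'a \<Rightarrow> (nat \<Rightarrow> 'b) \<Rightarrow> nat \<Rightarrow> 'a" where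
  "pth stp x0 \<omega> 0 = x0"
| "pth stp x0 \<omega> (Suc t) = stp (\<omega> t) (pth stp x0 \<omega> t)"

lemma pth_upd: "s \<le> t \<Longrightarrow> pth stp x0 ((fun_upd \<omega> t z)) s = pth stp x0 \<omega> s"
  by (induction s) auto

lemma pth_cong: "(\<And>s. s < t \<Longrightarrow> \<omega> s = \<omega>' s) \<Longrightarrow> pth stp x0 \<omega> t = pth stp x0 \<omega>' t"
  by (induction t) auto

primrec zp :: "(nat \<Rightarrow> real) \<Rightarrow> 'a::real_vector \<Rightarrow> (nat \<Rightarrow> 'a) \<Rightarrow> nat \<Rightarrow> 'a" where
  "zp c p X 0 = p"
| "zp c p X (Suc t) = c t *\<^sub>R zp c p X t + (1 - c t) *\<^sub>R X (Suc t)"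

lemma zp_cong: "(\<And>s. s \<le> t \<Longrightarrow> X s = X' s) \<Longrightarrow> zp c p X t = zp c p X' t"
  by (induction t) auto


locale rip2 = rip D f gradf F g m L Lg xs
  for D :: "'i measure" and f :: "'i \<Rightarrow> 'a::euclidean_space \<Rightarrow> real" and gradf F g m L Lg xs +
  fixes \<tau> :: real and T :: nat and x0 p :: 'a
  assumes tau_pos: "0 < \<tau>" and tauL: "\<tau> * L \<le> 1/5"
    and p_min: "F p + (\<Sum>j=1..m. g j p) = F xs + (\<Sum>j=1..m. g j xs)"
begin

definition "eps = 4 * \<tau> * L"
definition "v j = (\<Prod>k\<in>{1..j}. (real k + eps) / (real k + 1))"
definition "w s = v (T - s)"
definition "a t s = 2*\<tau>*(w (s-1) - (real (t+1) - real s) * (w s - w (s-1)) - eps * w s)"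

lemma eps_nn: "0 \<le> eps" using tau_pos L_pos by (simp add: eps_def)
lemma eps_le: "eps \<le> 4/5"
proof -
  have "eps = 4 * (\<tau> * L)" by (simp add: eps_def)
  thus ?thesis using tauL by linarith
qed

lemma v_pos: "0 < v j"
  unfolding v_def using eps_nn by (intro prod_pos) (auto intro!: divide_pos_pos add_pos_nonneg)

lemma v_Suc: "v (Suc j) = v j * ((real (Suc j) + eps) / (real (Suc j) + 1))"
  unfolding v_def by simp

lemma v_dec: "v (Suc j) \<le> v j"
proof -
  have "(real (Suc j) + eps) / (real (Suc j) + 1) \<le> 1" using eps_le by simp
  hence "v j * ((real (Suc j) + eps) / (real (Suc j) + 1)) \<le> v j * 1"
    using v_pos[of j] by (intro mult_left_mono) auto
  thus ?thesis by (simp add: v_Suc)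
qed

lemma w_pos: "0 < w s" by (simp add: w_def v_pos)
lemma w_T: "w T = 1" by (simp add: w_def v_def)

lemma w_mono: "s < T \<Longrightarrow> w s \<le> w (Suc s)"
proof -
  assume s: "s < T"
  have "T - s = Suc (T - Suc s)" using s by simp
  thus ?thesis unfolding w_def using v_dec by simp
qed

lemma w_id: "1 \<le> s \<Longrightarrow> s \<le> T \<Longrightarrow> w (s-1) * (real T + 2 - real s) = (real T + 1 - real s + eps) * w s"
proof -
  assume s: "1 \<le> s" "s \<le> T"
  define j where "j = T - s"
  have e1: "T - (s - Suc 0) = Suc j" using s by (simp add: j_def)
  have rj: "real j = real T - real s" using s by (simp add: j_def)
  have "w (s-1) = v j * ((real (Suc j) + eps) / (real (Suc j) + 1))"
    by (simp add: w_def e1 v_Suc)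
  hence "w (s-1) * (real (Suc j) + 1) = v j * (real (Suc j) + eps)"
    by (simp add: field_simps)
  moreover have "w s = v j" by (simp add: w_def j_def)
  ultimately show ?thesis using rj by (simp add: algebra_simps)
qed

lemma a_nonneg: "1 \<le> s \<Longrightarrow> s \<le> t \<Longrightarrow> t \<le> T \<Longrightarrow> 0 \<le> a t s"
proof -
  assume s: "1 \<le> s" "s \<le> t" "t \<le> T"
  have id: "w (s-1) * (real T + 2 - real s) = (real T + 1 - real s + eps) * w s"
    using s by (intro w_id) auto
  have e: "eps * w s = w (s-1) * (real T + 2 - real s) - (real T + 1 - real s) * w s"
    using id by (simp add: algebra_simps)
  have "a t s = 2*\<tau>*((real T - real t) * (w s - w (s-1)))"
    unfolding a_def e by (simp add: algebra_simps)
  moreover have "w (s-1) \<le> w s" using w_mono[of "s-1"] s by simp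
  ultimately show ?thesis using s tau_pos by simp
qed

lemma a_rel1: "a (Suc t) s + 2*\<tau>*(w s - w (s-1)) = a t s"
  unfolding a_def by (simp add: algebra_simps)

lemma a_rel2: "a (Suc t) (Suc t) + 2*\<tau>*(w (Suc t) - w t) + 2*\<tau>*eps*w (Suc t) = 2*\<tau>*w t"
  unfolding a_def by (simp add: algebra_simps)


definition "stp q x = step \<tau> (snd q) (fst q) x"
definition "X \<omega> t = pth stp x0 \<omega> t"
definition "Z \<omega> t = zp (\<lambda>s. w s / w (Suc s)) p (X \<omega>) t"
definition "e \<omega> s = h (X \<omega> s) - h xs"
definition "Ps t \<omega> = (\<Sum>s\<in>{1..t}. a t s * e \<omega> s) + w t * (2*\<tau>*e \<omega> (Suc t) + (norm (X \<omega> (Suc t) - Z \<omega> t))^2)"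
definition "cc = 4 * sig2 + 16*(real m)^2*Lg^2"
abbreviation "P \<equiv> PiM {..T} (\<lambda>_. Q)"

lemma hp: "h p = h xs" using p_min by (simp add: h_def G_def)
lemma e_nn: "0 \<le> e \<omega> s" using h_ge by (simp add: e_def)

lemma Z_0: "Z \<omega> 0 = p" by (simp add: Z_def)
lemma Z_Suc: "Z \<omega> (Suc t) = (w t / w (Suc t)) *\<^sub>R Z \<omega> t + (1 - w t / w (Suc t)) *\<^sub>R X \<omega> (Suc t)"
  by (simp add: Z_def)
lemma X_0: "X \<omega> 0 = x0" by (simp add: X_def)
lemma X_Suc: "X \<omega> (Suc t) = stp (\<omega> t) (X \<omega> t)" by (simp add: X_def)

lemma X_upd: "s \<le> k \<Longrightarrow> X (fun_upd \<omega> k z) s = X \<omega> s"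
  unfolding X_def by (rule pth_upd)
lemma Z_upd: "t \<le> k \<Longrightarrow> Z (fun_upd \<omega> k z) t = Z \<omega> t"
  unfolding Z_def by (rule zp_cong) (simp add: X_upd)
lemma e_upd: "s \<le> k \<Longrightarrow> e (fun_upd \<omega> k z) s = e \<omega> s"
  by (simp add: e_def X_upd)
lemma X_Suc_upd: "X (fun_upd \<omega> k z) (Suc k) = stp z (X \<omega> k)"
  by (simp add: X_Suc X_upd)

lemma Zdist: "t < T \<Longrightarrow> w (Suc t) * (norm (X \<omega> (Suc t) - Z \<omega> (Suc t)))^2 \<le> w t * (norm (X \<omega> (Suc t) - Z \<omega> t))^2"
proof -
  assume t: "t < T"
  define c where "c = w t / w (Suc t)"
  have c: "0 \<le> c" "c \<le> 1" using w_pos[of t] w_pos[of "Suc t"] w_mono[OF t] by (auto simp: c_def)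
  have "X \<omega> (Suc t) - Z \<omega> (Suc t) = c *\<^sub>R (X \<omega> (Suc t) - Z \<omega> t)"
    by (simp add: Z_Suc c_def[symmetric] algebra_simps)
  hence "w (Suc t) * (norm (X \<omega> (Suc t) - Z \<omega> (Suc t)))^2 = (w (Suc t) * c) * c * (norm (X \<omega> (Suc t) - Z \<omega> t))^2"
    by (simp add: power_mult_distrib power2_eq_square)
  also have "w (Suc t) * c = w t" using w_pos[of "Suc t"] by (simp add: c_def)
  also have "w t * c * (norm (X \<omega> (Suc t) - Z \<omega> t))^2 \<le> w t * 1 * (norm (X \<omega> (Suc t) - Z \<omega> t))^2"
    using c w_pos[of t] by (intro mult_right_mono mult_left_mono) auto
  finally show ?thesis by simp
qed

lemma Zh: "t \<le> T \<Longrightarrow> w t * (h (Z \<omega> t) - h xs) \<le> (\<Sum>s\<in>{1..t}. (w s - w (s-1)) * e \<omega> s)"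
proof (induction t)
  case 0 thus ?case by (simp add: Z_0 hp)
next
  case (Suc t)
  hence t: "t < T" by simp
  define c where "c = w t / w (Suc t)"
  have c: "0 \<le> c" "c \<le> 1" using w_pos[of t] w_pos[of "Suc t"] w_mono[OF t] by (auto simp: c_def)
  have "h (Z \<omega> (Suc t)) = h ((1 - (1 - c)) *\<^sub>R Z \<omega> t + (1 - c) *\<^sub>R X \<omega> (Suc t))"
    by (simp add: Z_Suc c_def[symmetric])
  also have "\<dots> \<le> (1 - (1 - c)) * h (Z \<omega> t) + (1 - c) * h (X \<omega> (Suc t))"
    using c by (intro convex_onD[OF h_convex]) auto
  finally have hz: "h (Z \<omega> (Suc t)) \<le> c * h (Z \<omega> t) + (1 - c) * h (X \<omega> (Suc t))" by simp
  have "w (Suc t) * h (Z \<omega> (Suc t)) \<le> w (Suc t) * (c * h (Z \<omega> t) + (1 - c) * h (X \<omega> (Suc t)))"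
    using hz w_pos[of "Suc t"] by (intro mult_left_mono) auto
  also have "\<dots> = w t * h (Z \<omega> t) + (w (Suc t) - w t) * h (X \<omega> (Suc t))"
    using w_pos[of "Suc t"] by (simp add: c_def algebra_simps)
  finally have "w (Suc t) * (h (Z \<omega> (Suc t)) - h xs) \<le> w t * (h (Z \<omega> t) - h xs) + (w (Suc t) - w t) * e \<omega> (Suc t)"
    by (simp add: e_def algebra_simps)
  also have "\<dots> \<le> (\<Sum>s\<in>{1..t}. (w s - w (s-1)) * e \<omega> s) + (w (Suc t) - w t) * e \<omega> (Suc t)"
    using Suc by simp
  also have "\<dots> = (\<Sum>s\<in>{1..Suc t}. (w s - w (s-1)) * e \<omega> s)" by simp
  finally show ?case .
qed

lemma Q_prob: "prob_space Q"
proof -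
  interpret D: prob_space D by (rule Dp)
  interpret U: prob_space U by (rule prob_space_measure_pmf)
  show ?thesis by (rule prob_space_pair) unfold_locales
qed

lemma P_prob: "prob_space P" by (intro prob_space_PiM Q_prob)

lemma comp_k: "k \<le> T \<Longrightarrow> (\<lambda>\<omega>. \<omega> k) \<in> measurable P Q"
  by (rule measurable_component_singleton) auto
lemma comp_fst: "k \<le> T \<Longrightarrow> (\<lambda>\<omega>. fst (\<omega> k)) \<in> measurable P D"
  using measurable_compose[OF comp_k measurable_fst] by simp
lemma comp_snd: "k \<le> T \<Longrightarrow> (\<lambda>\<omega>. snd (\<omega> k)) \<in> measurable P (count_space UNIV)"
  using measurable_compose[OF comp_k snd_meas] by simp

lemma X_meas[measurable]: "t \<le> Suc T \<Longrightarrow> (\<lambda>\<omega>. X \<omega> t) \<in> borel_measurable P"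
proof (induction t)
  case 0 thus ?case by (simp add: X_0)
next
  case (Suc t)
  hence t: "t \<le> T" by simp
  have "(\<lambda>\<omega>. step \<tau> (snd (\<omega> t)) (fst (\<omega> t)) (X \<omega> t)) \<in> borel_measurable P"
    using tau_pos Suc t by (intro step_meas comp_fst comp_snd) auto
  thus ?case by (simp add: X_Suc stp_def)
qed

lemma Z_meas[measurable]: "t \<le> T \<Longrightarrow> (\<lambda>\<omega>. Z \<omega> t) \<in> borel_measurable P"
proof (induction t)
  case 0 thus ?case by (simp add: Z_0)
next
  case (Suc t)
  hence "(\<lambda>\<omega>. Z \<omega> t) \<in> borel_measurable P" "(\<lambda>\<omega>. X \<omega> (Suc t)) \<in> borel_measurable P" by auto
  thus ?case unfolding Z_Suc by measurable
qed

lemma e_meas[measurable]: "s \<le> Suc T \<Longrightarrow> (\<lambda>\<omega>. e \<omega> s) \<in> borel_measurable P"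
  unfolding e_def by measurable

lemma Ps_meas[measurable]: "t \<le> T \<Longrightarrow> (\<lambda>\<omega>. Ps t \<omega>) \<in> borel_measurable P"
  unfolding Ps_def by measurable

end


context rip2 begin

lemma Ps_upd_gen: "Ps t (fun_upd \<omega> t z) = (\<Sum>s\<in>{1..t}. a t s * e \<omega> s)
   + w t * (2*\<tau>*(h (stp z (X \<omega> t)) - h xs) + (norm (stp z (X \<omega> t) - Z \<omega> t))^2)"
proof -
  have "(\<Sum>s\<in>{1..t}. a t s * e (fun_upd \<omega> t z) s) = (\<Sum>s\<in>{1..t}. a t s * e \<omega> s)"
    by (rule sum.cong) (auto simp: e_upd)
  moreover have "e (fun_upd \<omega> t z) (Suc t) = h (stp z (X \<omega> t)) - h xs"
    by (simp add: e_def X_Suc_upd)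
  moreover have "X (fun_upd \<omega> t z) (Suc t) = stp z (X \<omega> t)" by (rule X_Suc_upd)
  moreover have "Z (fun_upd \<omega> t z) t = Z \<omega> t" by (rule Z_upd) simp
  ultimately show ?thesis unfolding Ps_def by simp
qed

lemma Ps_upd: "Suc t \<le> k \<Longrightarrow> Ps t (fun_upd \<omega> k z) = Ps t \<omega>"
proof -
  assume k: "Suc t \<le> k"
  have "(\<Sum>s\<in>{1..t}. a t s * e (fun_upd \<omega> k z) s) = (\<Sum>s\<in>{1..t}. a t s * e \<omega> s)"
    using k by (intro sum.cong) (auto simp: e_upd)
  moreover have "e (fun_upd \<omega> k z) (Suc t) = e \<omega> (Suc t)" using k by (simp add: e_upd)
  moreover have "X (fun_upd \<omega> k z) (Suc t) = X \<omega> (Suc t)" using k by (simp add: X_upd)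
  moreover have "Z (fun_upd \<omega> k z) t = Z \<omega> t" using k by (simp add: Z_upd)
  ultimately show ?thesis unfolding Ps_def by simp
qed

lemma step_real:
  assumes t: "Suc t \<le> T"
  shows "(\<Sum>s\<in>{1..Suc t}. a (Suc t) s * e \<omega> s) + w (Suc t) * ((norm (X \<omega> (Suc t) - Z \<omega> (Suc t)))^2
      + 2*\<tau>*(h (Z \<omega> (Suc t)) - h xs) + 8*\<tau>^2*L*(h (X \<omega> (Suc t)) - h xs) + \<tau>^2*cc)
     \<le> Ps t \<omega> + w (Suc t) * \<tau>^2 * cc"
proof -
  define SA where "SA = (\<Sum>s\<in>{1..t}. a (Suc t) s * e \<omega> s)"
  define SB where "SB = (\<Sum>s\<in>{1..t}. (w s - w (s-1)) * e \<omega> s)"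
  define SC where "SC = (\<Sum>s\<in>{1..t}. a t s * e \<omega> s)"
  define E' where "E' = e \<omega> (Suc t)"
  define HZ where "HZ = h (Z \<omega> (Suc t)) - h xs"
  define DZ' where "DZ' = (norm (X \<omega> (Suc t) - Z \<omega> (Suc t)))^2"
  define DZ where "DZ = (norm (X \<omega> (Suc t) - Z \<omega> t))^2"
  define w' where "w' = w (Suc t)"
  have S1: "(\<Sum>s\<in>{1..Suc t}. a (Suc t) s * e \<omega> s) = SA + a (Suc t) (Suc t) * E'"
    by (simp add: SA_def E'_def)
  have "w (Suc t) * (h (Z \<omega> (Suc t)) - h xs) \<le> (\<Sum>s\<in>{1..Suc t}. (w s - w (s-1)) * e \<omega> s)"
    using t by (intro Zh) 
  hence Zh': "w' * HZ \<le> SB + (w' - w t) * E'" by (simp add: SB_def w'_def HZ_def E'_def)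
  hence Zh2: "2*\<tau>*(w' * HZ) \<le> 2*\<tau>*SB + 2*\<tau>*(w' - w t)*E'"
    using mult_left_mono[OF Zh', of "2*\<tau>"] tau_pos by (simp add: algebra_simps)
  have S3: "SA + 2*\<tau>*SB = SC"
  proof -
    have "SA + 2*\<tau>*SB = (\<Sum>s\<in>{1..t}. (a (Suc t) s + 2*\<tau>*(w s - w (s-1))) * e \<omega> s)"
      by (simp add: SA_def SB_def sum_distrib_left sum.distrib[symmetric] algebra_simps)
    also have "\<dots> = SC" by (simp only: SC_def a_rel1)
    finally show ?thesis .
  qed
  have R2: "a (Suc t) (Suc t) * E' + 2*\<tau>*(w' - w t)*E' + 2*\<tau>*eps*w'*E' = 2*\<tau>*w t*E'"
  proof -
    have "(a (Suc t) (Suc t) + 2*\<tau>*(w (Suc t) - w t) + 2*\<tau>*eps*w (Suc t)) * E' = (2*\<tau>*w t) * E'"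
      by (simp only: a_rel2)
    thus ?thesis by (simp add: w'_def algebra_simps)
  qed
  have Zd: "w' * DZ' \<le> w t * DZ" unfolding w'_def DZ'_def DZ_def by (rule Zdist) (use t in simp)
  have ep: "w' * (8*\<tau>^2*L*E') = 2*\<tau>*eps*w'*E'" by (simp add: eps_def power2_eq_square algebra_simps)
  have lhs: "w' * (DZ' + 2*\<tau>*HZ + 8*\<tau>^2*L*E' + \<tau>^2*cc) = w' * DZ' + 2*\<tau>*(w' * HZ) + w' * (8*\<tau>^2*L*E') + w' * (\<tau>^2*cc)"
    by (simp add: algebra_simps)
  have rhs: "Ps t \<omega> + w (Suc t) * \<tau>^2 * cc = SC + 2*\<tau>*w t*E' + w t * DZ + w' * (\<tau>^2*cc)"
    by (simp add: Ps_def SC_def E'_def DZ_def w'_def algebra_simps)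
  have "(\<Sum>s\<in>{1..Suc t}. a (Suc t) s * e \<omega> s) + w' * (DZ' + 2*\<tau>*HZ + 8*\<tau>^2*L*E' + \<tau>^2*cc)
     \<le> Ps t \<omega> + w (Suc t) * \<tau>^2 * cc"
    unfolding S1 lhs rhs using Zh2 S3 R2 Zd ep by linarith
  thus ?thesis by (simp add: w'_def DZ'_def HZ_def E'_def e_def)
qed


lemma Ps_nn: "t \<le> T \<Longrightarrow> 0 \<le> Ps t \<omega>"
  unfolding Ps_def using w_pos[of t] tau_pos e_nn
  by (intro add_nonneg_nonneg sum_nonneg mult_nonneg_nonneg a_nonneg) auto

lemma cc_nn: "0 \<le> cc"
proof -
  interpret D: prob_space D by (rule Dp)
  have "0 \<le> sig2" unfolding sig2_def by simp
  thus ?thesis by (simp add: cc_def)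
qed

lemma main_ind: "t \<le> T \<Longrightarrow> (\<integral>\<^sup>+\<omega>. ennreal (Ps t \<omega>) \<partial>P)
   \<le> ennreal (w 0 * ((norm (x0 - p))^2 + 8*\<tau>^2*L*(h x0 - h xs)) + \<tau>^2*cc*(\<Sum>s\<le>t. w s))"
proof (induction t)
  case 0
  define C where "C = w 0 * ((norm (x0 - p))^2 + 8*\<tau>^2*L*(h x0 - h xs)) + \<tau>^2*cc*(\<Sum>s\<le>(0::nat). w s)"
  have "(\<integral>\<^sup>+\<omega>. ennreal (Ps 0 \<omega>) \<partial>P) \<le> (\<integral>\<^sup>+\<omega>. ennreal C \<partial>P)"
  proof (rule pim_step[OF Q_prob finite_atMost])
    show "0 \<in> {..T}" by simp
    show "(\<lambda>\<omega>. ennreal (Ps 0 \<omega>)) \<in> borel_measurable P" using Ps_meas[of 0] by measurable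
    show "(\<lambda>\<omega>. ennreal C) \<in> borel_measurable P" by simp
    show "\<And>\<omega> y. ennreal C = ennreal C" by simp
    fix \<omega> assume "\<omega> \<in> space P"
    have "(\<integral>\<^sup>+z. ennreal (Ps 0 (fun_upd \<omega> 0 z)) \<partial>Q) = (\<integral>\<^sup>+z. ennreal (0 + w 0 * (2*\<tau>*(h (step \<tau> (snd z) (fst z) x0) - h xs) + (norm (step \<tau> (snd z) (fst z) x0 - p))^2)) \<partial>Q)"
      by (simp add: Ps_upd_gen stp_def X_0 Z_0)
    also have "\<dots> \<le> ennreal (0 + w 0 * ((norm (x0 - p))^2 + 2*\<tau>*(h p - h xs) + 8*\<tau>^2*L*(h x0 - h xs) + \<tau>^2*(4 * sig2 + 16*(real m)^2*Lg^2)))"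
      by (rule inner_int[OF tau_pos tauL]) (use w_pos[of 0] in auto)
    also have "\<dots> = ennreal C" by (simp add: C_def hp cc_def algebra_simps)
    finally show "(\<integral>\<^sup>+z. ennreal (Ps 0 (fun_upd \<omega> 0 z)) \<partial>Q) \<le> ennreal C" .
  qed
  also have "\<dots> = ennreal C" using prob_space.emeasure_space_1[OF P_prob] by simp
  finally show ?case by (simp add: C_def)
next
  case (Suc t)
  hence t: "Suc t \<le> T" and IH: "(\<integral>\<^sup>+\<omega>. ennreal (Ps t \<omega>) \<partial>P)
     \<le> ennreal (w 0 * ((norm (x0 - p))^2 + 8*\<tau>^2*L*(h x0 - h xs)) + \<tau>^2*cc*(\<Sum>s\<le>t. w s))" by auto
  define K where "K = w (Suc t) * \<tau>^2 * cc"
  have K: "0 \<le> K" using w_pos[of "Suc t"] cc_nn by (simp add: K_def)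
  have "(\<integral>\<^sup>+\<omega>. ennreal (Ps (Suc t) \<omega>) \<partial>P) \<le> (\<integral>\<^sup>+\<omega>. ennreal (Ps t \<omega> + K) \<partial>P)"
  proof (rule pim_step[OF Q_prob finite_atMost])
    show "Suc t \<in> {..T}" using t by simp
    show "(\<lambda>\<omega>. ennreal (Ps (Suc t) \<omega>)) \<in> borel_measurable P" using Ps_meas[OF t] by measurable
    have tT: "t \<le> T" using t by simp
    show "(\<lambda>\<omega>. ennreal (Ps t \<omega> + K)) \<in> borel_measurable P" using Ps_meas[OF tT] by measurable
    show "\<And>\<omega> y. ennreal (Ps t (fun_upd \<omega> (Suc t) y) + K) = ennreal (Ps t \<omega> + K)"
      by (simp add: Ps_upd)
    fix \<omega> assume "\<omega> \<in> space P"
    define R where "R = (\<Sum>s\<in>{1..Suc t}. a (Suc t) s * e \<omega> s)"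
    have R: "0 \<le> R" unfolding R_def using t e_nn
      by (intro sum_nonneg mult_nonneg_nonneg a_nonneg) auto
    have "(\<integral>\<^sup>+z. ennreal (Ps (Suc t) (fun_upd \<omega> (Suc t) z)) \<partial>Q) = (\<integral>\<^sup>+z. ennreal (R + w (Suc t) * (2*\<tau>*(h (step \<tau> (snd z) (fst z) (X \<omega> (Suc t))) - h xs) + (norm (step \<tau> (snd z) (fst z) (X \<omega> (Suc t)) - Z \<omega> (Suc t)))^2)) \<partial>Q)"
      by (simp add: Ps_upd_gen stp_def R_def)
    also have "\<dots> \<le> ennreal (R + w (Suc t) * ((norm (X \<omega> (Suc t) - Z \<omega> (Suc t)))^2 + 2*\<tau>*(h (Z \<omega> (Suc t)) - h xs) + 8*\<tau>^2*L*(h (X \<omega> (Suc t)) - h xs) + \<tau>^2*(4 * sig2 + 16*(real m)^2*Lg^2)))"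
      by (rule inner_int[OF tau_pos tauL R]) (use w_pos[of "Suc t"] in auto)
    also have "\<dots> \<le> ennreal (Ps t \<omega> + K)"
      using step_real[OF t, of \<omega>] unfolding R_def K_def cc_def by (intro ennreal_leI) simp
    finally show "(\<integral>\<^sup>+z. ennreal (Ps (Suc t) (fun_upd \<omega> (Suc t) z)) \<partial>Q) \<le> ennreal (Ps t \<omega> + K)" .
  qed
  also have "\<dots> = (\<integral>\<^sup>+\<omega>. ennreal (Ps t \<omega>) + ennreal K \<partial>P)"
    using Ps_nn[of t] t K by (intro nn_integral_cong) (simp add: ennreal_plus)
  also have "\<dots> = (\<integral>\<^sup>+\<omega>. ennreal (Ps t \<omega>) \<partial>P) + ennreal K"
    using Ps_meas[of t] t prob_space.emeasure_space_1[OF P_prob] by (subst nn_integral_add) auto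
  also have "\<dots> \<le> ennreal (w 0 * ((norm (x0 - p))^2 + 8*\<tau>^2*L*(h x0 - h xs)) + \<tau>^2*cc*(\<Sum>s\<le>t. w s)) + ennreal K"
    using IH by (rule add_right_mono)
  also have "\<dots> = ennreal (w 0 * ((norm (x0 - p))^2 + 8*\<tau>^2*L*(h x0 - h xs)) + \<tau>^2*cc*(\<Sum>s\<le>Suc t. w s))"
  proof -
    have nn: "0 \<le> w 0 * ((norm (x0 - p))^2 + 8*\<tau>^2*L*(h x0 - h xs)) + \<tau>^2*cc*(\<Sum>s\<le>t. w s)"
      using w_pos cc_nn h_ge[of x0] L_pos by (intro add_nonneg_nonneg mult_nonneg_nonneg sum_nonneg) (auto intro: less_imp_le)
    show ?thesis using nn K by (simp add: ennreal_plus[symmetric] K_def algebra_simps)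
  qed
  finally show ?case .
qed

end


lemma sqrt_step: "sqrt (real n + 1) + sqrt (real n) \<le> 5/4 * (real n + 1)"
proof -
  consider "n = 0" | "n = 1" | "n \<ge> 2" by linarith
  thus ?thesis
  proof cases
    case 1 thus ?thesis by simp
  next
    case 2
    have "sqrt 2 \<le> 3/2" by (rule real_le_lsqrt) (auto simp: power2_eq_square)
    thus ?thesis using 2 by simp
  next
    case 3
    define x where "x = real n + 1"
    have x3: "x \<ge> 3" using 3 by (simp add: x_def)
    have "x \<le> (5/8 * x)^2"
    proof -
      have "(5/8 * x)^2 = (25/64 * x) * x" by (simp add: power2_eq_square)
      moreover have "1 * x \<le> (25/64 * x) * x" using x3 by (intro mult_right_mono) auto
      ultimately show ?thesis by simp
    qed
    hence a: "sqrt x \<le> 5/8 * x" using x3 by (intro real_le_lsqrt) auto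
    have "sqrt (real n) \<le> sqrt x" by (simp add: x_def)
    with a show ?thesis unfolding x_def by linarith
  qed
qed

lemma harm_sqrt: "(harm n :: real) \<le> 5/4 * sqrt (real n)"
proof (induction n)
  case 0 thus ?case by (simp add: harm_def)
next
  case (Suc n)
  define a where "a = sqrt (real n + 1)"
  define b where "b = sqrt (real n)"
  have a0: "a > 0" and b0: "b \<ge> 0" by (auto simp: a_def b_def)
  have ab: "(a - b) * (a + b) = 1"
    by (simp add: a_def b_def algebra_simps power2_eq_square[symmetric])
  have s: "a + b \<le> 5/4 * (real n + 1)" unfolding a_def b_def by (rule sqrt_step)
  have "1 / (real n + 1) = (5/4) / (5/4 * (real n + 1))" by (simp add: field_simps)
  also have "\<dots> \<le> (5/4) / (a + b)" using a0 b0 s by (intro divide_left_mono) auto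
  also have "\<dots> = 5/4 * (a - b)" using ab a0 b0 by (simp add: field_simps)
  finally have st: "1 / (real n + 1) \<le> 5/4 * (a - b)" .
  have "harm (Suc n) = harm n + 1 / (real n + 1)" by (simp add: harm_Suc field_simps)
  also have "\<dots> \<le> 5/4 * b + 5/4 * (a - b)" using Suc.IH st unfolding b_def by linarith
  also have "\<dots> = 5/4 * a" by (simp add: field_simps)
  also have "\<dots> = 5/4 * sqrt (real (Suc n))" by (simp add: a_def add.commute)
  finally show ?case .
qed

lemma prod_exp_bound:
  assumes c: "0 \<le> c"
  shows "(\<Prod>k\<in>{1..j}. 1 + c / real k) \<le> exp (c * harm j)"
proof -
  have "exp (c * harm j) = exp (\<Sum>k\<in>{1..j}. c / real k)"
    by (simp add: harm_def sum_distrib_left field_simps)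
  also have "\<dots> = (\<Prod>k\<in>{1..j}. exp (c / real k))" by (rule exp_sum) simp
  finally have e: "exp (c * harm j) = (\<Prod>k\<in>{1..j}. exp (c / real k))" .
  have "(\<Prod>k\<in>{1..j}. 1 + c / real k) \<le> (\<Prod>k\<in>{1..j}. exp (c / real k))"
    using c by (intro prod_mono) (auto simp: exp_ge_add_one_self add.commute)
  thus ?thesis using e by simp
qed

lemma harm_ln: "(harm (Suc n) :: real) \<le> 1 + ln (real (Suc n))"
proof -
  have d: "\<forall>m n. m \<le> n \<longrightarrow> harm (Suc n) - ln (real (Suc n)) \<le> harm (Suc m) - ln (real (Suc m))"
    using decseq_harm_diff_ln unfolding decseq_def by simp
  hence "harm (Suc n) - ln (real (Suc n)) \<le> harm (Suc 0) - ln (real (Suc 0))" by blast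
  moreover have "harm (Suc 0) = (1::real)" by (simp add: harm_def)
  ultimately show ?thesis by simp
qed

lemma harm_sum: "(\<Sum>j\<le>T. 1 / (real j + 1)) = (harm (Suc T) :: real)"
proof (induction T)
  case 0 thus ?case by (simp add: harm_def)
next
  case (Suc T)
  have "(\<Sum>j\<le>Suc T. 1 / (real j + 1)) = (\<Sum>j\<le>T. 1 / (real j + 1)) + 1 / (real (Suc T) + 1)" by simp
  also have "\<dots> = harm (Suc T) + inverse (of_nat (Suc (Suc T)))" using Suc by (simp add: inverse_eq_divide add.commute)
  also have "\<dots> = harm (Suc (Suc T))" by (rule harm_Suc[symmetric])
  finally show ?case .
qed


context rip2 begin

lemma sum_w: "(\<Sum>s\<le>T. w s) = (\<Sum>j\<le>T. v j)"
proof -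
  have "(\<Sum>s\<le>T. w s) = (\<Sum>s<Suc T. v (Suc T - Suc s))"
    by (simp add: w_def lessThan_Suc_atMost)
  also have "\<dots> = (\<Sum>j<Suc T. v j)" by (rule sum.nat_diff_reindex)
  finally show ?thesis by (simp add: lessThan_Suc_atMost)
qed

lemma final_P: "(\<integral>\<^sup>+\<omega>. ennreal (e \<omega> (Suc T)) \<partial>P)
  \<le> ennreal ((v T * ((norm (x0 - p))^2 + 8*\<tau>^2*L*(h x0 - h xs)) + \<tau>^2*cc*(\<Sum>j\<le>T. v j)) / (2*\<tau>))"
proof -
  define C where "C = v T * ((norm (x0 - p))^2 + 8*\<tau>^2*L*(h x0 - h xs)) + \<tau>^2*cc*(\<Sum>j\<le>T. v j)"
  have pw: "ennreal (2*\<tau>) * ennreal (e \<omega> (Suc T)) \<le> ennreal (Ps T \<omega>)" for \<omega>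
  proof -
    have "0 \<le> (\<Sum>s\<in>{1..T}. a T s * e \<omega> s)"
      using e_nn by (intro sum_nonneg mult_nonneg_nonneg a_nonneg) auto
    hence "2*\<tau>*e \<omega> (Suc T) \<le> Ps T \<omega>" unfolding Ps_def w_T by simp
    thus ?thesis using tau_pos e_nn by (simp add: ennreal_mult[symmetric] ennreal_leI)
  qed
  have "ennreal (2*\<tau>) * (\<integral>\<^sup>+\<omega>. ennreal (e \<omega> (Suc T)) \<partial>P) = (\<integral>\<^sup>+\<omega>. ennreal (2*\<tau>) * ennreal (e \<omega> (Suc T)) \<partial>P)"
    by (rule nn_integral_cmult[symmetric]) measurable
  also have "\<dots> \<le> (\<integral>\<^sup>+\<omega>. ennreal (Ps T \<omega>) \<partial>P)" by (intro nn_integral_mono pw)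
  also have "\<dots> \<le> ennreal C" using main_ind[of T] unfolding sum_w by (simp add: C_def w_def)
  finally have A: "ennreal (2*\<tau>) * (\<integral>\<^sup>+\<omega>. ennreal (e \<omega> (Suc T)) \<partial>P) \<le> ennreal C" .
  have "(\<integral>\<^sup>+\<omega>. ennreal (e \<omega> (Suc T)) \<partial>P) = ennreal (1/(2*\<tau>)) * (ennreal (2*\<tau>) * (\<integral>\<^sup>+\<omega>. ennreal (e \<omega> (Suc T)) \<partial>P))"
    using tau_pos by (simp add: mult.assoc[symmetric] ennreal_mult[symmetric])
  also have "\<dots> \<le> ennreal (1/(2*\<tau>)) * ennreal C" by (intro mult_left_mono A) simp
  also have "\<dots> = ennreal (C / (2*\<tau>))"
  proof -
    have "0 \<le> C" unfolding C_def using v_pos[of T] cc_nn h_ge[of x0] L_pos v_pos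
      by (intro add_nonneg_nonneg mult_nonneg_nonneg sum_nonneg) (auto intro: less_imp_le)
    thus ?thesis using tau_pos by (simp add: ennreal_mult[symmetric])
  qed
  finally show ?thesis by (simp add: C_def)
qed

lemma v_mul: "v j * (real j + 1) = (\<Prod>k\<in>{1..j}. 1 + eps / real k)"
proof (induction j)
  case 0 thus ?case by (simp add: v_def)
next
  case (Suc j)
  have "v (Suc j) * (real (Suc j) + 1) = v j * (real (Suc j) + eps)"
    by (simp add: v_Suc field_simps)
  also have "\<dots> = (v j * (real j + 1)) * (1 + eps / real (Suc j))"
    by (simp add: field_simps)
  also have "\<dots> = (\<Prod>k\<in>{1..Suc j}. 1 + eps / real k)" using Suc by simp
  finally show ?case .
qed

lemma v_bound:
  assumes T1: "T \<ge> 1" and tau_eq: "\<tau> = 1 / (5 * L * sqrt (real T))" and j: "j \<le> T"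
  shows "v j \<le> 3 / (real j + 1)"
proof -
  have sT: "sqrt (real T) > 0" using T1 by simp
  have e1: "eps = 4 * (\<tau> * L)" by (simp add: eps_def)
  have e2: "\<tau> * L = 1 / (5 * sqrt (real T))" using L_pos sT unfolding tau_eq by (simp add: field_simps)
  have epsq: "eps = 4 / (5 * sqrt (real T))" unfolding e1 e2 by simp
  have "eps * harm j \<le> eps * (5/4 * sqrt (real j))"
    using eps_nn harm_sqrt[of j] by (intro mult_left_mono) auto
  also have "\<dots> \<le> eps * (5/4 * sqrt (real T))"
    using eps_nn j by (intro mult_left_mono) auto
  also have "\<dots> = 1" using sT by (simp add: epsq)
  finally have "exp (eps * harm j) \<le> exp 1" by simp
  hence "(\<Prod>k\<in>{1..j}. 1 + eps / real k) \<le> 3"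
    using prod_exp_bound[OF eps_nn, of j] exp_le by linarith
  hence "v j * (real j + 1) \<le> 3" by (simp add: v_mul)
  thus ?thesis by (simp add: field_simps)
qed

lemma final_num:
  assumes T1: "T \<ge> 1" and tau_eq: "\<tau> = 1 / (5 * L * sqrt (real T))"
  shows "(v T * ((norm (x0 - p))^2 + 8*\<tau>^2*L*(h x0 - h xs)) + \<tau>^2*cc*(\<Sum>j\<le>T. v j)) / (2*\<tau>)
    \<le> 10 / sqrt (real T) * (L * (norm (x0 - p))^2 + 1 / sqrt (real T) * (h x0 - h xs)
        + (sig2 + 4 * (real m)^2 * Lg^2) / L * (1 / real T + 4 * ln (real T + 1)))"
proof -
  define s where "s = sqrt (real T)"
  define A0 where "A0 = (norm (x0 - p))^2"
  define E0 where "E0 = h x0 - h xs"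
  define S where "S = sig2 + 4 * (real m)^2 * Lg^2"
  define lnT where "lnT = ln (real T + 1)"
  have s1: "s \<ge> 1" using T1 by (simp add: s_def)
  have ss: "s * s = real T" by (simp add: s_def)
  have A0: "A0 \<ge> 0" by (simp add: A0_def)
  have E0: "E0 \<ge> 0" using h_ge by (simp add: E0_def)
  have S: "S \<ge> 0" using cc_nn by (simp add: S_def cc_def)
  have ccS: "cc = 4 * S" by (simp add: cc_def S_def)
  have lnT: "lnT \<ge> 0" by (simp add: lnT_def)
  have L0: "L > 0" by (rule L_pos)
  have tauL: "\<tau> * L = 1 / (5 * s)" using L0 by (simp add: tau_eq s_def)
  have vT: "v T \<le> 3 / (real T + 1)" by (rule v_bound[OF T1 tau_eq]) simp
  have vT0: "0 \<le> v T" using v_pos[of T] by simp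
  have sumv: "(\<Sum>j\<le>T. v j) \<le> 3 * (1 + lnT)"
  proof -
    have "(\<Sum>j\<le>T. v j) \<le> (\<Sum>j\<le>T. 3 * (1 / (real j + 1)))"
      by (intro sum_mono) (use v_bound[OF T1 tau_eq] in auto)
    also have "\<dots> = 3 * harm (Suc T)" by (simp only: sum_distrib_left[symmetric] harm_sum)
    also have "\<dots> \<le> 3 * (1 + lnT)" using harm_ln[of T] by (simp add: lnT_def add.commute)
    finally show ?thesis .
  qed
  have LHS: "(v T * (A0 + 8*\<tau>^2*L*E0) + \<tau>^2*cc*(\<Sum>j\<le>T. v j)) / (2*\<tau>)
     = v T * A0 * (5 * L * s / 2) + v T * E0 * (4 * (\<tau> * L)) + (\<tau> / 2) * cc * (\<Sum>j\<le>T. v j)"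
    using tau_pos L0 s1 by (simp add: tau_eq s_def field_simps power2_eq_square)
  have T0: "real T > 0" using T1 by simp
  have f1: "3/(real T+1) * (5*L* s/2) \<le> 10/s * L"
  proof -
    have "3/(real T+1) * (5*L* s/2) = ((15/2) * L * s) / (real T + 1)" by (simp add: field_simps)
    also have "\<dots> \<le> ((15/2) * L * s) / real T" using T0 L0 s1 by (intro divide_left_mono) auto
    also have "\<dots> = (15/2) * L / s" unfolding ss[symmetric] using s1 by (simp add: field_simps)
    also have "\<dots> \<le> 10 * L / s" using L0 s1 by (intro divide_right_mono) auto
    finally show ?thesis by simp
  qed
  have t1: "v T * A0 * (5 * L * s / 2) \<le> 10 / s * (L * A0)"
  proof -
    have "v T * A0 * (5 * L * s / 2) = v T * (5 * L * s / 2) * A0" by simp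
    also have "\<dots> \<le> 3 / (real T + 1) * (5 * L * s / 2) * A0"
      using vT A0 L0 s1 by (intro mult_right_mono) auto
    also have "\<dots> \<le> 10/s * L * A0" using f1 A0 by (intro mult_right_mono) auto
    finally show ?thesis by simp
  qed
  have f2: "3/(real T+1) * (4/(5* s)) \<le> 10 / s * (1 / s)"
  proof -
    have "3/(real T+1) * (4/(5* s)) = (12/5) / (s * (real T + 1))" by (simp add: field_simps)
    also have "\<dots> \<le> (12/5) / real T"
    proof (rule divide_left_mono)
      have "1 * real T \<le> s * (real T + 1)" using s1 T0 by (intro mult_mono) auto
      thus "real T \<le> s * (real T + 1)" by simp
      show "0 < s * (real T + 1) * real T" using s1 T0 by simp
    qed simp
    also have "\<dots> \<le> 10 / real T" using T0 by (intro divide_right_mono) auto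
    also have "\<dots> = 10 / s * (1 / s)" unfolding ss[symmetric] by simp
    finally show ?thesis .
  qed
  have t2: "v T * E0 * (4 * (\<tau> * L)) \<le> 10 / s * (1 / s * E0)"
  proof -
    have "v T * E0 * (4 * (\<tau> * L)) = v T * (4/(5* s)) * E0" unfolding tauL by simp
    also have "\<dots> \<le> 3 / (real T + 1) * (4/(5* s)) * E0"
      using vT E0 s1 by (intro mult_right_mono) auto
    also have "\<dots> \<le> 10 / s * (1 / s) * E0" using f2 E0 by (intro mult_right_mono) auto
    finally show ?thesis by simp
  qed
  have t3: "(\<tau> / 2) * cc * (\<Sum>j\<le>T. v j) \<le> 10 / s * (S / L * (1 / real T + 4 * lnT))"
  proof -
    have "(\<tau> / 2) * cc * (\<Sum>j\<le>T. v j) \<le> (\<tau> / 2) * cc * (3 * (1 + lnT))"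
      using sumv tau_pos cc_nn by (intro mult_left_mono) auto
    also have "\<dots> = (6/5) * S * (1 + lnT) / (L * s)"
      using L0 s1 by (simp add: tau_eq s_def ccS field_simps)
    also have "\<dots> \<le> 10 * S * (1 / real T + 4 * lnT) / (L * s)"
    proof -
      have key: "(6/5) * (1 + lnT) \<le> 10 * (1 / real T + 4 * lnT)"
      proof (cases "T = 1")
        case True thus ?thesis using lnT by simp
      next
        case False
        hence "real T + 1 \<ge> 3" using T1 by simp
        hence "exp 1 \<le> real T + 1" using exp_le by linarith
        hence "1 \<le> lnT" unfolding lnT_def by (subst ln_ge_iff) auto
        hence a: "6/5 * (1 + lnT) \<le> 40 * lnT" by (simp add: field_simps)
        have b: "40 * lnT \<le> 10 * (1 / real T + 4 * lnT)" by (simp add: algebra_simps)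
        from a b show ?thesis by (rule order_trans)
      qed
      have "(6/5) * S * (1 + lnT) \<le> 10 * S * (1 / real T + 4 * lnT)"
        using mult_left_mono[OF key S] by (simp add: algebra_simps)
      thus ?thesis using L0 s1 by (intro divide_right_mono) auto
    qed
    finally show ?thesis by (simp add: field_simps)
  qed
  have "(v T * (A0 + 8*\<tau>^2*L*E0) + \<tau>^2*cc*(\<Sum>j\<le>T. v j)) / (2*\<tau>)
     \<le> 10 / s * (L * A0) + 10 / s * (1 / s * E0) + 10 / s * (S / L * (1 / real T + 4 * lnT))"
    unfolding LHS using t1 t2 t3 by linarith
  also have "\<dots> = 10 / s * (L * A0 + 1 / s * E0 + S / L * (1 / real T + 4 * lnT))"
    by (simp add: algebra_simps)
  finally show ?thesis by (simp add: A0_def E0_def S_def lnT_def s_def)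
qed

end


context rip begin

lemma rip_iter_eq: "(\<forall>t<s. J' t \<in> {1..m}) \<Longrightarrow>
   rip_iter x0 \<tau> m gradf g I' J' s = pth (\<lambda>q x. step \<tau> (snd q) (fst q) x) x0 (\<lambda>t. (I' t, J' t)) s"
proof (induction s)
  case 0 thus ?case by simp
next
  case (Suc s)
  hence IH: "rip_iter x0 \<tau> m gradf g I' J' s = pth (\<lambda>q x. step \<tau> (snd q) (fst q) x) x0 (\<lambda>t. (I' t, J' t)) s"
    and j: "J' s \<in> {1..m}" by auto
  show ?case using IH j by (simp add: step_def cl_id)
qed

lemma AE_Q: "AE q in Q. snd q \<in> {1..m}"
proof -
  interpret PP: pair_sigma_finite D U
    by (intro pair_sigma_finite.intro prob_space_imp_sigma_finite Dp prob_space_measure_pmf)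
  show ?thesis
  proof (rule PP.AE_pair_measure)
    have "(\<lambda>q. snd q) \<in> measurable Q (count_space UNIV)" by (rule snd_meas)
    hence "{q \<in> space Q. snd q \<in> {1..m}} = (\<lambda>q. snd q) -` {1..m} \<inter> space Q" by auto
    also have "\<dots> \<in> sets Q" using snd_meas by (rule measurable_sets) simp
    finally show "{q \<in> space Q. snd q \<in> {1..m}} \<in> sets Q" .
    show "AE x in D. AE y in U. snd (x, y) \<in> {1..m}"
      using m_pos by (intro AE_I2 AE_pmfI) auto
  qed
qed

end


theorem theorem4p1:
  fixes D :: "'i measure"
    and f :: "'i \<Rightarrow> 'a::euclidean_space \<Rightarrow> real"
    and gradf :: "'i \<Rightarrow> 'a \<Rightarrow> 'a"
    and F :: "'a \<Rightarrow> real"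
    and g :: "nat \<Rightarrow> 'a \<Rightarrow> real"
    and m :: nat and L Lg :: real
    and x0 xs :: 'a
    and M :: "'w measure"
    and I :: "nat \<Rightarrow> 'w \<Rightarrow> 'i" and J :: "nat \<Rightarrow> 'w \<Rightarrow> nat"
    and T :: nat
  assumes D_prob: "prob_space D"
    and L_pos: "L > 0"
    and f_convex: "\<And>i. i \<in> space D \<Longrightarrow> convex_on UNIV (f i)"
    and f_grad: "\<And>i x. i \<in> space D \<Longrightarrow> (f i has_derivative (\<lambda>v. gradf i x \<bullet> v)) (at x)"
    and f_lipschitz: "\<And>i x y. i \<in> space D \<Longrightarrow> norm (gradf i x - gradf i y) \<le> L * norm (x - y)"
    and gradf_meas: "(\<lambda>(i, x). gradf i x) \<in> borel_measurable (D \<Otimes>\<^sub>M borel)"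
    and F_exp: "\<And>x. integrable D (\<lambda>i. f i x) \<and> F x = (\<integral>i. f i x \<partial>D)"
    and F_grad: "\<And>x. integrable D (\<lambda>i. gradf i x) \<and>
                  (F has_derivative (\<lambda>v. (\<integral>i. gradf i x \<partial>D) \<bullet> v)) (at x)"
    and m_pos: "m \<ge> 1"
    and g_convex: "\<And>j. j \<in> {1..m} \<Longrightarrow> convex_on UNIV (g j)"
    and g_lsc: "\<And>j. j \<in> {1..m} \<Longrightarrow> lower_semicontinuous (g j)"
    and g_lipschitz: "\<And>j x y. j \<in> {1..m} \<Longrightarrow> \<bar>g j x - g j y\<bar> \<le> Lg * norm (x - y)"
    and xs_min: "\<And>y. F xs + (\<Sum>j=1..m. g j xs) \<le> F y + (\<Sum>j=1..m. g j y)"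
    and sigma_fin: "integrable D (\<lambda>i. (norm (gradf i xs))^2)"
    and M_prob: "prob_space M"
    and indep: "prob_space.indep_vars M (\<lambda>t. D \<Otimes>\<^sub>M measure_pmf (pmf_of_set {1..m}))
                  (\<lambda>t \<omega>. (I t \<omega>, J t \<omega>)) {..T}"
    and distr_IJ: "\<And>t. t \<le> T \<Longrightarrow>
                  distr M (D \<Otimes>\<^sub>M measure_pmf (pmf_of_set {1..m})) (\<lambda>\<omega>. (I t \<omega>, J t \<omega>))
                  = D \<Otimes>\<^sub>M measure_pmf (pmf_of_set {1..m})"
    and T_pos: "T \<ge> 1"
  shows
    "let h = (\<lambda>x. F x + (\<Sum>j=1..m. g j x));
         hstar = h xs;
         Xstar = {x. \<forall>y. h x \<le> h y};
         Dstar2 = Inf ((\<lambda>x. (norm (x - x0))^2) ` Xstar);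
         sigma2 = (\<integral>i. (norm (gradf i xs))^2 \<partial>D);
         \<tau> = 1 / (5 * L * sqrt (real T))
     in (\<integral>\<^sup>+ \<omega>. ennreal (h (rip_iter x0 \<tau> m gradf g (\<lambda>t. I t \<omega>) (\<lambda>t. J t \<omega>) (T + 1)) - hstar) \<partial>M)
        \<le> ennreal (10 / sqrt (real T) *
             (L * Dstar2 + 1 / sqrt (real T) * (h x0 - hstar)
              + (sigma2 + 4 * (real m)^2 * Lg^2) / L * (1 / real T + 4 * ln (real T + 1))))"
proof -
  interpret R: rip D f gradf F g m L Lg xs
    by (rule rip.intro[OF D_prob L_pos f_convex f_grad f_lipschitz gradf_meas F_exp F_grad m_pos
          g_convex g_lipschitz xs_min sigma_fin])
  define \<tau> where "\<tau> = 1 / (5 * L * sqrt (real T))"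
  have sT: "sqrt (real T) \<ge> 1" using T_pos by simp
  have tau_pos: "0 < \<tau>" using L_pos sT by (simp add: \<tau>_def)
  have tauL: "\<tau> * L \<le> 1/5"
  proof -
    have "\<tau> * L = 1 / (5 * sqrt (real T))" using L_pos by (simp add: \<tau>_def)
    also have "\<dots> \<le> 1 / (5 * 1)" using sT by (intro divide_left_mono) auto
    finally show ?thesis by simp
  qed
  define stp where "stp = (\<lambda>q x. R.step \<tau> (snd q) (fst q) x)"
  define Pm where "Pm = PiM {..T} (\<lambda>_. D \<Otimes>\<^sub>M measure_pmf (pmf_of_set {1..m}))"
  define LHS where "LHS = (\<integral>\<^sup>+\<omega>. ennreal (R.h (pth stp x0 \<omega> (Suc T)) - R.h xs) \<partial>Pm)"
  define K where "K = 10 / sqrt (real T) * (1 / sqrt (real T) * (R.h x0 - R.h xs)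
              + (R.sig2 + 4 * (real m)^2 * Lg^2) / L * (1 / real T + 4 * ln (real T + 1)))"
  define c where "c = 10 / sqrt (real T) * L"
  have c0: "c > 0" using L_pos sT by (simp add: c_def)
  have key: "LHS \<le> ennreal (K + c * (norm (p - x0))^2)" if pm: "\<And>y. R.h p \<le> R.h y" for p
  proof -
    have pmin: "F p + (\<Sum>j=1..m. g j p) = F xs + (\<Sum>j=1..m. g j xs)"
      using pm[of xs] R.h_ge[of p] by (simp add: R.h_def R.G_def)
    interpret R2: rip2 D f gradf F g m L Lg xs \<tau> T x0 p
      by (intro rip2.intro R.rip_axioms rip2_axioms.intro tau_pos tauL pmin)
    have e_eq: "R2.e \<omega> (Suc T) = R.h (pth stp x0 \<omega> (Suc T)) - R.h xs" for \<omega>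
      by (simp add: R2.e_def R2.X_def R2.stp_def[abs_def] stp_def)
    have "LHS = (\<integral>\<^sup>+\<omega>. ennreal (R2.e \<omega> (Suc T)) \<partial>R2.P)"
      by (simp add: LHS_def e_eq Pm_def)
    also have "\<dots> \<le> ennreal ((R2.v T * ((norm (x0 - p))^2 + 8*\<tau>^2*L*(R.h x0 - R.h xs)) + \<tau>^2*R2.cc*(\<Sum>j\<le>T. R2.v j)) / (2*\<tau>))"
      by (rule R2.final_P)
    also have "\<dots> \<le> ennreal (10 / sqrt (real T) * (L * (norm (x0 - p))^2 + 1 / sqrt (real T) * (R.h x0 - R.h xs)
        + (R.sig2 + 4 * (real m)^2 * Lg^2) / L * (1 / real T + 4 * ln (real T + 1))))"
      by (intro ennreal_leI R2.final_num T_pos \<tau>_def)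
    also have "\<dots> = ennreal (K + c * (norm (p - x0))^2)"
      by (simp add: K_def c_def algebra_simps norm_minus_commute)
    finally show ?thesis .
  qed
  interpret Mp: prob_space M by (rule M_prob)
  define Q where "Q = D \<Otimes>\<^sub>M measure_pmf (pmf_of_set {1..m})"
  define \<Phi> where "\<Phi> = (\<lambda>\<omega>. \<lambda>t\<in>{..T}. (I t \<omega>, J t \<omega>))"
  have rv: "\<And>t. t \<in> {..T} \<Longrightarrow> (\<lambda>\<omega>. (I t \<omega>, J t \<omega>)) \<in> measurable M Q"
    using indep unfolding Mp.indep_vars_def Q_def by auto
  have "distr M (PiM {..T} (\<lambda>t. Q)) (\<lambda>x. \<lambda>t\<in>{..T}. (I t x, J t x)) = PiM {..T} (\<lambda>t. distr M Q (\<lambda>\<omega>. (I t \<omega>, J t \<omega>)))"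
    using Mp.indep_vars_iff_distr_eq_PiM'[where I="{..T}" and M'="\<lambda>t. Q" and X="\<lambda>t \<omega>. (I t \<omega>, J t \<omega>)", OF _ rv] indep
    unfolding Q_def by auto
  also have "\<dots> = Pm" unfolding Pm_def Q_def by (intro PiM_cong refl distr_IJ) simp
  finally have distrP: "distr M Pm \<Phi> = Pm" unfolding \<Phi>_def Pm_def Q_def .
  have \<Phi>m: "\<Phi> \<in> measurable M Pm"
    unfolding \<Phi>_def Pm_def by (rule measurable_restrict) (use rv in \<open>auto simp: Q_def\<close>)
  have intm: "(\<lambda>\<omega>. ennreal (R.h (pth stp x0 \<omega> (Suc T)) - R.h xs)) \<in> borel_measurable Pm"
  proof -
    have pmin: "F xs + (\<Sum>j=1..m. g j xs) = F xs + (\<Sum>j=1..m. g j xs)" by simp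
    interpret R2: rip2 D f gradf F g m L Lg xs \<tau> T x0 xs
      by (intro rip2.intro R.rip_axioms rip2_axioms.intro tau_pos tauL pmin)
    have e_eq: "R2.e \<omega> (Suc T) = R.h (pth stp x0 \<omega> (Suc T)) - R.h xs" for \<omega>
      by (simp add: R2.e_def R2.X_def R2.stp_def[abs_def] stp_def)
    have "(\<lambda>\<omega>. ennreal (R2.e \<omega> (Suc T))) \<in> borel_measurable R2.P"
      using R2.e_meas[of "Suc T"] by measurable
    thus ?thesis by (simp add: e_eq Pm_def)
  qed
  have AEJ: "AE \<omega> in M. \<forall>t\<in>{..T}. J t \<omega> \<in> {1..m}"
  proof (subst AE_finite_all)
    show "finite {..T}" by simp
    show "\<forall>t\<in>{..T}. AE \<omega> in M. J t \<omega> \<in> {1..m}"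
    proof
      fix t assume t: "t \<in> {..T}"
      have dq: "distr M Q (\<lambda>\<omega>. (I t \<omega>, J t \<omega>)) = Q"
        unfolding Q_def using t by (intro distr_IJ) simp
      have "AE q in Q. snd q \<in> {1..m}" using R.AE_Q unfolding Q_def .
      hence "AE q in distr M Q (\<lambda>\<omega>. (I t \<omega>, J t \<omega>)). snd q \<in> {1..m}"
        unfolding dq .
      from AE_distrD[OF rv[OF t] this] show "AE \<omega> in M. J t \<omega> \<in> {1..m}" by simp
    qed
  qed
  have transfer: "(\<integral>\<^sup>+\<omega>. ennreal (R.h (rip_iter x0 \<tau> m gradf g (\<lambda>t. I t \<omega>) (\<lambda>t. J t \<omega>) (T + 1)) - R.h xs) \<partial>M) = LHS"
  proof -
    have "(\<integral>\<^sup>+\<omega>. ennreal (R.h (rip_iter x0 \<tau> m gradf g (\<lambda>t. I t \<omega>) (\<lambda>t. J t \<omega>) (T + 1)) - R.h xs) \<partial>M)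
        = (\<integral>\<^sup>+\<omega>. ennreal (R.h (pth stp x0 (\<Phi> \<omega>) (Suc T)) - R.h xs) \<partial>M)"
    proof (rule nn_integral_cong_AE)
      show "AE \<omega> in M. ennreal (R.h (rip_iter x0 \<tau> m gradf g (\<lambda>t. I t \<omega>) (\<lambda>t. J t \<omega>) (T + 1)) - R.h xs)
          = ennreal (R.h (pth stp x0 (\<Phi> \<omega>) (Suc T)) - R.h xs)"
        using AEJ
      proof (rule AE_mp, intro AE_I2 impI)
        fix \<omega> assume all: "\<forall>t\<in>{..T}. J t \<omega> \<in> {1..m}"
        have "rip_iter x0 \<tau> m gradf g (\<lambda>t. I t \<omega>) (\<lambda>t. J t \<omega>) (Suc T)
            = pth (\<lambda>q x. R.step \<tau> (snd q) (fst q) x) x0 (\<lambda>t. (I t \<omega>, J t \<omega>)) (Suc T)"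
          using all by (intro R.rip_iter_eq) auto
        also have "\<dots> = pth stp x0 (\<Phi> \<omega>) (Suc T)"
          unfolding stp_def by (rule pth_cong) (simp add: \<Phi>_def)
        finally show "ennreal (R.h (rip_iter x0 \<tau> m gradf g (\<lambda>t. I t \<omega>) (\<lambda>t. J t \<omega>) (T + 1)) - R.h xs)
          = ennreal (R.h (pth stp x0 (\<Phi> \<omega>) (Suc T)) - R.h xs)" by simp
      qed
    qed
    also have "\<dots> = (\<integral>\<^sup>+\<omega>. ennreal (R.h (pth stp x0 \<omega> (Suc T)) - R.h xs) \<partial>distr M Pm \<Phi>)"
    proof -
      have intm': "(\<lambda>\<omega>. ennreal (R.h (pth stp x0 \<omega> (Suc T)) - R.h xs)) \<in> borel_measurable (distr M Pm \<Phi>)"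
        using intm by (simp add: measurable_distr_eq1)
      show ?thesis by (rule nn_integral_distr[OF \<Phi>m intm', symmetric])
    qed
    also have "\<dots> = LHS" unfolding distrP LHS_def ..
    finally show ?thesis .
  qed
  define Xs where "Xs = {x. \<forall>y. R.h x \<le> R.h y}"
  define S where "S = (\<lambda>x. (norm (x - x0))^2) ` Xs"
  have xsX: "xs \<in> Xs" using R.h_ge by (simp add: Xs_def)
  have K0: "K \<ge> 0"
  proof -
    interpret Dp: prob_space D by (rule D_prob)
    have "0 \<le> R.sig2" unfolding R.sig2_def by simp
    moreover have "0 \<le> R.h x0 - R.h xs" using R.h_ge by simp
    moreover have "0 \<le> ln (real T + 1)" by simp
    ultimately show ?thesis unfolding K_def using L_pos sT
      by (intro mult_nonneg_nonneg add_nonneg_nonneg divide_nonneg_pos) auto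
  qed
  have bndS: "LHS \<le> ennreal (K + c * d)" if "d \<in> S" for d
    using that key by (auto simp: S_def Xs_def)
  have "LHS \<le> ennreal (K + c * Inf S)"
  proof (cases LHS rule: ennreal_cases)
    case (real l)
    have Sne: "S \<noteq> {}" using xsX by (auto simp: S_def)
    have "(l - K) / c \<le> Inf S"
    proof (rule cInf_greatest[OF Sne])
      fix d assume d: "d \<in> S"
      have d0: "0 \<le> d" using d by (auto simp: S_def)
      have "ennreal l \<le> ennreal (K + c * d)" using bndS[OF d] real by simp
      hence "l \<le> K + c * d" using K0 c0 d0 by (subst (asm) ennreal_le_iff) auto
      thus "(l - K) / c \<le> d" using c0 by (simp add: field_simps)
    qed
    hence "l \<le> K + c * Inf S" using c0 by (simp add: field_simps)
    thus ?thesis using real by (simp add: ennreal_leI)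
  next
    case top
    have "LHS \<le> ennreal (K + c * (norm (xs - x0))^2)" using bndS xsX by (auto simp: S_def)
    thus ?thesis using top by (simp add: top_unique)
  qed
  hence final: "(\<integral>\<^sup>+\<omega>. ennreal (R.h (rip_iter x0 \<tau> m gradf g (\<lambda>t. I t \<omega>) (\<lambda>t. J t \<omega>) (T + 1)) - R.h xs) \<partial>M)
     \<le> ennreal (K + c * Inf S)" using transfer by simp
  have hfun: "(\<lambda>x. F x + (\<Sum>j=1..m. g j x)) = R.h" by (simp add: fun_eq_iff R.h_def R.G_def)
  show ?thesis
    using final unfolding Let_def hfun
    by (simp add: K_def c_def S_def Xs_def \<tau>_def R.sig2_def algebra_simps)
qed


end
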